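(* Let $\mathcal{G}$ be a compact group acting orthogonally on $\mathbb{R}^d$. Let $\gamma$ be a coupling (joint law) of $(Z_0,Z_1)$ on $\mathbb{R}^d\times\mathbb{R}^d$ with finite second moments that is diagonal-invariant, i.e. $(g,g)_{\#}\gamma=\gamma$ for all $g\in\mathcal{G}$. For fixed $t\in[0,1]$ let $Z_t=(1-t)Z_0+tZ_1$, $U:=Z_1-Z_0$, and for measurable $v:\mathbb{R}^d\to\mathbb{R}^d$ let $\mathcal{L}_t(v):=\mathbb{E}[\|v(Z_t)-U\|^2]$. Then the Bayes regressor $v^\star(z)=\mathbb{E}[U\mid Z_t=z]$ is $\mathcal{G}$-equivariant: $v^\star(g\cdot z)=g\cdot v^\star(z)$ for all $g\in\mathcal{G}$. Consequently, with $\mathcal{H}_{\mathrm{eq}}:=\{v:\ v(g\cdot z)=g\cdot v(z)\ \forall g,z\}$, $$\inf_{v\in\mathcal{H}_{\mathrm{eq}}}\mathcal{L}_t(v)=\inf_v\mathcal{L}_t(v)=\mathbb{E}\big[\mathrm{Var}(U\mid Z_t)\big].$$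
   Context: $\mathrm{Var}(U\mid Z_t)=\mathbb{E}[\|U-\mathbb{E}[U\mid Z_t]\|^2\mid Z_t]$; the infimum without subscript is over all measurable $v$. Since conditional expectations are defined almost everywhere, equivariance of $v^\star$ is understood for a suitable version of $v^\star$ (equivalently, for each $g$, for almost every $z$ with respect to the law of $Z_t$). *)

theory Defs
  imports "HOL-Analysis.Analysis" "HOL-Probability.Probability"
begin

text \<open>Compact group acting orthogonally on R^d, represented by its image:
  a compact subgroup of the orthogonal group O(d), acting by g *v z.\<close>
definition compact_orth_group :: "(real^'n^'n) set \<Rightarrow> bool" where
  "compact_orth_group G \<longleftrightarrow>
     (\<forall>g\<in>G. orthogonal_matrix g) \<and> mat 1 \<in> G \<and>
     (\<forall>g\<in>G. \<forall>h\<in>G. g ** h \<in> G) \<and> (\<forall>g\<in>G. transpose g \<in> G) \<and> compact G"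

definition cond_exp_vec :: "'a measure \<Rightarrow> 'a measure \<Rightarrow> ('a \<Rightarrow> real^'n) \<Rightarrow> 'a \<Rightarrow> real^'n" where
  "cond_exp_vec M F U = (\<lambda>\<omega>. \<chi> i. real_cond_exp M F (\<lambda>x. U x $ i) \<omega>)"

definition Zt :: "real \<Rightarrow> ((real^'n) \<times> (real^'n)) \<Rightarrow> real^'n" where
  "Zt t = (\<lambda>(x, y). (1 - t) *\<^sub>R x + t *\<^sub>R y)"

definition Udisp :: "((real^'n) \<times> (real^'n)) \<Rightarrow> real^'n" where
  "Udisp = (\<lambda>(x, y). y - x)"

definition sigZ :: "((real^'n) \<times> (real^'n)) measure \<Rightarrow> real \<Rightarrow> ((real^'n) \<times> (real^'n)) measure" where
  "sigZ \<gamma> t = vimage_algebra (space \<gamma>) (Zt t) borel"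

definition bayes_regressor :: "((real^'n) \<times> (real^'n)) measure \<Rightarrow> real \<Rightarrow> (real^'n \<Rightarrow> real^'n) \<Rightarrow> bool" where
  "bayes_regressor \<gamma> t v \<longleftrightarrow> v \<in> borel_measurable borel \<and>
     (AE \<omega> in \<gamma>. v (Zt t \<omega>) = cond_exp_vec \<gamma> (sigZ \<gamma> t) Udisp \<omega>)"

definition loss :: "((real^'n) \<times> (real^'n)) measure \<Rightarrow> real \<Rightarrow> (real^'n \<Rightarrow> real^'n) \<Rightarrow> ennreal" where
  "loss \<gamma> t v = (\<integral>\<^sup>+ \<omega>. ennreal ((norm (v (Zt t \<omega>) - Udisp \<omega>))\<^sup>2) \<partial>\<gamma>)"

definition cond_var :: "((real^'n) \<times> (real^'n)) measure \<Rightarrow> real \<Rightarrow> ((real^'n) \<times> (real^'n)) \<Rightarrow> real" where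
  "cond_var \<gamma> t = real_cond_exp \<gamma> (sigZ \<gamma> t)
     (\<lambda>\<omega>. (norm (Udisp \<omega> - cond_exp_vec \<gamma> (sigZ \<gamma> t) Udisp \<omega>))\<^sup>2)"

definition equivariant :: "(real^'n^'n) set \<Rightarrow> (real^'n \<Rightarrow> real^'n) \<Rightarrow> bool" where
  "equivariant G v \<longleftrightarrow> (\<forall>g\<in>G. \<forall>z. v (g *v z) = g *v v z)"

end

theory Submission
  imports Defs
begin


locale bmeas = prob_space \<mu> for \<mu> :: "(real^'n) measure" +
  assumes sets_mu[measurable_cong]: "sets \<mu> = sets borel"
begin

lemma space_mu: "space \<mu> = UNIV"
  using sets_eq_imp_space_eq[OF sets_mu] by simp

definition avg :: "real \<Rightarrow> (real^'n \<Rightarrow> real) \<Rightarrow> real^'n \<Rightarrow> real" where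
  "avg r f z = (\<integral>y. indicator (ball z r) y * f y \<partial>\<mu>) / measure \<mu> (ball z r)"

lemma ball_pred_borel[measurable]:
  "{p::(real^'n) \<times> (real^'n). dist (fst p) (snd p) < r} \<in> sets (borel \<Otimes>\<^sub>M borel)"
proof -
  have "open {p::(real^'n) \<times> (real^'n). dist (fst p) (snd p) < r}"
    by (intro open_Collect_less continuous_intros)
  then show ?thesis unfolding borel_prod by (rule borel_open)
qed

lemma ball_pred_meas[measurable]:
  "{p::(real^'n) \<times> (real^'n). dist (fst p) (snd p) < r} \<in> sets (borel \<Otimes>\<^sub>M \<mu>)"
  using ball_pred_borel sets_pair_measure_cong[OF refl sets_mu] by simp

lemma ind_ball_eq: "indicator (ball z r) y = indicator {p. dist (fst p) (snd p) < r} (z, y)"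
  by (simp add: indicator_def)

lemma avg_num_meas[measurable]:
  fixes f :: "real^'n \<Rightarrow> real"
  assumes [measurable]: "f \<in> borel_measurable borel"
  shows "(\<lambda>z. \<integral>y. indicator (ball z r) y * f y \<partial>\<mu>) \<in> borel_measurable borel"
proof -
  have fmu: "f \<in> borel_measurable \<mu>" using assms by (subst measurable_cong_sets[OF sets_mu refl])
  have "(\<lambda>x::(real^'n)\<times>(real^'n). indicator {p. dist (fst p) (snd p) < r} x * f (snd x)) \<in> borel_measurable ((borel::(real^'n) measure) \<Otimes>\<^sub>M \<mu>)"
  proof (rule borel_measurable_times)
    show "indicator {p::(real^'n)\<times>(real^'n). dist (fst p) (snd p) < r} \<in> borel_measurable ((borel::(real^'n) measure) \<Otimes>\<^sub>M \<mu>)"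
      by (rule borel_measurable_indicator[OF ball_pred_meas])
    show "(\<lambda>x::(real^'n)\<times>(real^'n). f (snd x)) \<in> borel_measurable ((borel::(real^'n) measure) \<Otimes>\<^sub>M \<mu>)"
      by (rule measurable_compose[OF measurable_snd fmu])
  qed
  then have "(\<lambda>(z::real^'n,y). indicator {p. dist (fst p) (snd p) < r} (z, y) * f y) \<in> borel_measurable ((borel::(real^'n) measure) \<Otimes>\<^sub>M \<mu>)"
    by (simp add: case_prod_beta')
  then have "(\<lambda>(z::real^'n,y). indicator (ball z r) y * f y) \<in> borel_measurable ((borel::(real^'n) measure) \<Otimes>\<^sub>M \<mu>)"
    by (simp add: ind_ball_eq)
  then show ?thesis
    by (rule borel_measurable_lebesgue_integral)
qed

lemma measure_ball_eq: "measure \<mu> (ball z r) = (\<integral>y. indicator (ball z r) y * 1 \<partial>\<mu>)"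
  by (simp add: sets_mu)

lemma measure_ball_meas[measurable]: "(\<lambda>z. measure \<mu> (ball z r)) \<in> borel_measurable borel"
  unfolding measure_ball_eq by measurable

lemma avg_meas[measurable]:
  fixes f :: "real^'n \<Rightarrow> real"
  assumes [measurable]: "f \<in> borel_measurable borel"
  shows "avg r f \<in> borel_measurable borel"
  unfolding avg_def by measurable

lemma ball_sets[measurable]: "ball z r \<in> sets \<mu>"
  by (simp add: sets_mu)

lemma sq_integrable_imp_integrable:
  fixes f :: "real^'n \<Rightarrow> real"
  assumes [measurable]: "f \<in> borel_measurable borel" and sq: "integrable \<mu> (\<lambda>y. (f y)\<^sup>2)"
  shows "integrable \<mu> f"
proof (rule Bochner_Integration.integrable_bound[of _ "\<lambda>y. 1 + (f y)\<^sup>2"])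
  show "integrable \<mu> (\<lambda>y. 1 + (f y)\<^sup>2)" using sq by simp
  show "f \<in> borel_measurable \<mu>" by measurable
  show "AE x in \<mu>. norm (f x) \<le> norm (1 + (f x)\<^sup>2)"
  proof (rule AE_I2)
    fix x
    have "0 \<le> (\<bar>f x\<bar> - 1)\<^sup>2" by simp
    moreover have "(\<bar>f x\<bar> - 1)\<^sup>2 = (f x)\<^sup>2 - 2*\<bar>f x\<bar> + 1"
      by (simp add: power2_diff)
    moreover have "0 \<le> (f x)\<^sup>2" by simp
    ultimately have "\<bar>f x\<bar> \<le> 1 + (f x)\<^sup>2" by linarith
    then show "norm (f x) \<le> norm (1 + (f x)\<^sup>2)" by simp
  qed
qed

lemma integrable_ind_mult:
  fixes f :: "real^'n \<Rightarrow> real"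
  assumes "integrable \<mu> f" "A \<in> sets \<mu>"
  shows "integrable \<mu> (\<lambda>y. indicator A y * f y)"
  using integrable_mult_indicator[OF assms(2,1)] by (simp add: mult.commute)

lemma avg_sq_le:
  fixes f :: "real^'n \<Rightarrow> real"
  assumes [measurable]: "f \<in> borel_measurable borel" and sq: "integrable \<mu> (\<lambda>y. (f y)\<^sup>2)"
  shows "(avg r f z)\<^sup>2 \<le> (\<integral>y. indicator (ball z r) y * (f y)\<^sup>2 \<partial>\<mu>) / measure \<mu> (ball z r)"
proof -
  define m where "m = measure \<mu> (ball z r)"
  define I1 where "I1 = (\<integral>y. indicator (ball z r) y * f y \<partial>\<mu>)"
  define I2 where "I2 = (\<integral>y. indicator (ball z r) y * (f y)\<^sup>2 \<partial>\<mu>)"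
  have fi: "integrable \<mu> f" by (rule sq_integrable_imp_integrable) (use sq in auto)
  have i1: "integrable \<mu> (\<lambda>y. indicator (ball z r) y * f y)"
    by (rule integrable_ind_mult[OF fi]) simp
  have i2: "integrable \<mu> (\<lambda>y. indicator (ball z r) y * (f y)\<^sup>2)"
    by (rule integrable_ind_mult[OF sq]) simp
  have i0: "integrable \<mu> (\<lambda>y. indicator (ball z r) y :: real)"
    by (rule integrable_real_indicator) (auto simp: less_top[symmetric])
  have I2nn: "0 \<le> I2" unfolding I2_def by (intro integral_nonneg_AE) auto
  have mnn: "0 \<le> m" unfolding m_def by simp
  show ?thesis
  proof (cases "m = 0")
    case True
    then show ?thesis by (simp add: avg_def m_def[symmetric])
  next
    case False
    then have mpos: "m > 0" using mnn by simp
    define a where "a = I1 / m"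
    have "0 \<le> (\<integral>y. indicator (ball z r) y * (f y - a)\<^sup>2 \<partial>\<mu>)"
      by (intro integral_nonneg_AE) auto
    also have "(\<lambda>y. indicator (ball z r) y * (f y - a)\<^sup>2) =
        (\<lambda>y. indicator (ball z r) y * (f y)\<^sup>2 - 2 * a * (indicator (ball z r) y * f y) + a\<^sup>2 * indicator (ball z r) y)"
      by (rule ext) (simp add: power2_eq_square algebra_simps)
    also have "(\<integral>y. indicator (ball z r) y * (f y)\<^sup>2 - 2 * a * (indicator (ball z r) y * f y) + a\<^sup>2 * indicator (ball z r) y \<partial>\<mu>)
        = I2 - 2 * a * I1 + a\<^sup>2 * m"
      using i0 i1 i2 by (simp add: I1_def I2_def m_def)
    also have "I1 = a * m" using mpos by (simp add: a_def)
    finally have "a\<^sup>2 * m \<le> I2" by (simp add: power2_eq_square algebra_simps)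
    then have "a\<^sup>2 \<le> I2 / m" using mpos by (simp add: field_simps)
    then show ?thesis by (simp add: avg_def a_def I1_def I2_def m_def)
  qed
qed

definition Kc :: nat where "Kc = (4 * CARD('n)) ^ CARD('n)"

lemma cover_cells:
  fixes y :: "real^'n" and r :: real
  assumes r: "r > 0"
  defines "M \<equiv> 4 * CARD('n)"
  defines "h \<equiv> 2 * r / real M"
  defines "S \<equiv> (\<lambda>k::'n \<Rightarrow> nat. {w::real^'n. \<forall>i. y$i - r + real (k i) * h \<le> w$i \<and> w$i < y$i - r + real (k i + 1) * h})"
  shows "ball y r \<subseteq> (\<Union>k\<in>Pi\<^sub>E UNIV (\<lambda>_. {..<M}). S k)"
    and "\<And>k w w'. w \<in> S k \<Longrightarrow> w' \<in> S k \<Longrightarrow> dist w w' < r"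
    and "\<And>k. S k \<in> sets borel"
proof -
  have Mpos: "real M > 0" unfolding M_def by simp
  have hpos: "h > 0" unfolding h_def using r Mpos by simp
  have Mh: "real M * h = 2 * r" unfolding h_def using Mpos by simp
  show "ball y r \<subseteq> (\<Union>k\<in>Pi\<^sub>E UNIV (\<lambda>_. {..<M}). S k)"
  proof
    fix w assume w: "w \<in> ball y r"
    define k where "k = (\<lambda>i. nat \<lfloor>(w$i - y$i + r) / h\<rfloor>)"
    have comp: "\<bar>w$i - y$i\<bar> < r" for i
      using w component_le_norm_cart[of "w - y" i] by (simp add: dist_norm norm_minus_commute)
    have k_ok: "y$i - r + real (k i) * h \<le> w$i \<and> w$i < y$i - r + real (k i + 1) * h \<and> k i < M" for i
    proof -
      define q where "q = (w$i - y$i + r) / h"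
      have q0: "0 < q" unfolding q_def using comp[of i] hpos by (auto intro: divide_pos_pos)
      have qM: "q < real M" unfolding q_def using comp[of i] hpos Mh
        by (simp add: divide_less_eq mult.commute)
      have fl0: "0 \<le> \<lfloor>q\<rfloor>" using q0 by simp
      have ki: "real (k i) = of_int \<lfloor>q\<rfloor>" unfolding k_def q_def[symmetric] using fl0 by simp
      have a: "of_int \<lfloor>q\<rfloor> \<le> q" by (rule of_int_floor_le)
      have b: "q < of_int \<lfloor>q\<rfloor> + 1" by (rule real_of_int_floor_add_one_gt)
      have "of_int \<lfloor>q\<rfloor> * h \<le> w$i - y$i + r"
        using a hpos unfolding q_def by (simp add: le_divide_eq)
      moreover have "w$i - y$i + r < (of_int \<lfloor>q\<rfloor> + 1) * h"
      proof -
        have "q * h < (of_int \<lfloor>q\<rfloor> + 1) * h" using b hpos by (simp add: mult_strict_right_mono)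
        moreover have "q * h = w$i - y$i + r" unfolding q_def using hpos by simp
        ultimately show ?thesis by simp
      qed
      moreover have "k i < M"
      proof -
        have "real (k i) < real M" using ki a qM by linarith
        then show ?thesis by simp
      qed
      ultimately show ?thesis using ki by (simp add: algebra_simps)
    qed
    have "k \<in> Pi\<^sub>E UNIV (\<lambda>_. {..<M})" using k_ok by (auto simp: PiE_def extensional_def)
    moreover have "w \<in> S k" unfolding S_def using k_ok by auto
    ultimately show "w \<in> (\<Union>k\<in>Pi\<^sub>E UNIV (\<lambda>_. {..<M}). S k)" by blast
  qed
  show "dist w w' < r" if "w \<in> S k" "w' \<in> S k" for k w w'
  proof -
    have ci: "\<bar>(w - w')$i\<bar> < h" for i
    proof -
      have "y$i - r + real (k i) * h \<le> w$i \<and> w$i < y$i - r + real (k i + 1) * h"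
           "y$i - r + real (k i) * h \<le> w'$i \<and> w'$i < y$i - r + real (k i + 1) * h"
        using that unfolding S_def by auto
      then show ?thesis by (simp add: abs_less_iff algebra_simps)
    qed
    have "dist w w' \<le> (\<Sum>i\<in>UNIV. \<bar>(w - w')$i\<bar>)"
      unfolding dist_norm by (rule norm_le_l1_cart)
    also have "\<dots> < (\<Sum>i\<in>(UNIV::'n set). h)"
      by (rule sum_strict_mono) (use ci in auto)
    also have "\<dots> = real CARD('n) * h" by simp
    also have "\<dots> = r / 2" unfolding h_def M_def by simp
    finally show ?thesis using r by simp
  qed
  show "S k \<in> sets borel" for k
  proof -
    have "S k = {w. \<forall>i\<in>UNIV. y$i - r + real (k i) * h \<le> w$i \<and> w$i < y$i - r + real (k i + 1) * h}"
      unfolding S_def by simp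
    also have "\<dots> \<in> sets borel" by measurable
    finally show ?thesis .
  qed
qed

lemma cover_card:
  shows "finite (Pi\<^sub>E (UNIV::'n set) (\<lambda>_. {..<4 * CARD('n)}))"
    and "card (Pi\<^sub>E (UNIV::'n set) (\<lambda>_. {..<4 * CARD('n)})) = Kc"
  by (intro finite_PiE; simp) (simp add: card_PiE Kc_def)

lemma cover_bound:
  fixes y :: "real^'n" and r :: real
  assumes r: "r > 0"
  shows "(\<integral>\<^sup>+ z. ennreal (indicator (ball y r) z * inverse (measure \<mu> (ball z r))) \<partial>\<mu>) \<le> of_nat Kc"
proof -
  define M where "M = 4 * CARD('n)"
  define h where "h = 2 * r / real M"
  define S where "S k = {w::real^'n. \<forall>i. y$i - r + real (k i) * h \<le> w$i \<and> w$i < y$i - r + real (k i + 1) * h}" for k :: "'n \<Rightarrow> nat"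
  define P where "P = Pi\<^sub>E (UNIV::'n set) (\<lambda>_. {..<M})"
  note cc = cover_cells[OF r, where y=y, folded M_def, folded h_def, folded S_def, folded P_def]
    cover_card[folded M_def, folded P_def]
  have Smeas[measurable]: "S k \<in> sets \<mu>" for k using cc(3) by (simp add: sets_mu)
  have le1: "(\<integral>\<^sup>+ z. ennreal (indicator (S k) z * inverse (measure \<mu> (ball z r))) \<partial>\<mu>) \<le> 1" for k
  proof (cases "measure \<mu> (S k) = 0")
    case True
    then have "S k \<in> null_sets \<mu>" by (intro null_setsI) (auto simp: emeasure_eq_measure)
    then have "AE z in \<mu>. z \<notin> S k" by (rule AE_not_in)
    then have "(\<integral>\<^sup>+ z. ennreal (indicator (S k) z * inverse (measure \<mu> (ball z r))) \<partial>\<mu>) = (\<integral>\<^sup>+ z. 0 \<partial>\<mu>)"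
      by (intro nn_integral_cong_AE) (auto elim: AE_mp)
    then show ?thesis by simp
  next
    case False
    define c where "c = inverse (measure \<mu> (S k))"
    have mpos: "measure \<mu> (S k) > 0" using False measure_nonneg[of \<mu> "S k"] by linarith
    have "(\<integral>\<^sup>+ z. ennreal (indicator (S k) z * inverse (measure \<mu> (ball z r))) \<partial>\<mu>)
        \<le> (\<integral>\<^sup>+ z. ennreal c * indicator (S k) z \<partial>\<mu>)"
    proof (rule nn_integral_mono)
      fix z
      show "ennreal (indicator (S k) z * inverse (measure \<mu> (ball z r))) \<le> ennreal c * indicator (S k) z"
      proof (cases "z \<in> S k")
        case True
        have "S k \<subseteq> ball z r" using cc(2)[OF True] by (auto simp: ball_def)
        then have "measure \<mu> (S k) \<le> measure \<mu> (ball z r)"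
          by (intro finite_measure_mono) auto
        then have "inverse (measure \<mu> (ball z r)) \<le> c"
          unfolding c_def using mpos by (intro le_imp_inverse_le) auto
        then show ?thesis using True by (simp add: ennreal_leI)
      qed simp
    qed
    also have "\<dots> = ennreal c * emeasure \<mu> (S k)"
      by (rule nn_integral_cmult_indicator) simp
    also have "\<dots> = 1"
      using mpos by (simp add: c_def emeasure_eq_measure ennreal_mult[symmetric])
    finally show ?thesis .
  qed
  have "(\<integral>\<^sup>+ z. ennreal (indicator (ball y r) z * inverse (measure \<mu> (ball z r))) \<partial>\<mu>)
      \<le> (\<integral>\<^sup>+ z. (\<Sum>k\<in>P. ennreal (indicator (S k) z * inverse (measure \<mu> (ball z r)))) \<partial>\<mu>)"
  proof (rule nn_integral_mono)
    fix z
    show "ennreal (indicator (ball y r) z * inverse (measure \<mu> (ball z r)))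
        \<le> (\<Sum>k\<in>P. ennreal (indicator (S k) z * inverse (measure \<mu> (ball z r))))"
    proof (cases "z \<in> ball y r")
      case True
      then obtain k where k: "k \<in> P" "z \<in> S k" using cc(1) by blast
      have "ennreal (indicator (ball y r) z * inverse (measure \<mu> (ball z r)))
          = ennreal (indicator (S k) z * inverse (measure \<mu> (ball z r)))" using True k by simp
      also have "\<dots> \<le> (\<Sum>k\<in>P. ennreal (indicator (S k) z * inverse (measure \<mu> (ball z r))))"
        by (rule member_le_sum) (use k cc(4) in auto)
      finally show ?thesis .
    qed simp
  qed
  also have "\<dots> = (\<Sum>k\<in>P. (\<integral>\<^sup>+ z. ennreal (indicator (S k) z * inverse (measure \<mu> (ball z r))) \<partial>\<mu>))"
    by (rule nn_integral_sum) measurable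
  also have "\<dots> \<le> of_nat (card P) * 1"
    by (rule sum_bounded_above) (rule le1)
  also have "\<dots> = of_nat Kc" using cc(5) by simp
  finally show ?thesis .
qed

lemma pair_ball_meas:
  fixes g h :: "real^'n \<Rightarrow> real"
  assumes [measurable]: "g \<in> borel_measurable borel" "h \<in> borel_measurable borel"
  shows "(\<lambda>(z,y). indicator (ball z r) y * g y * h z) \<in> borel_measurable (\<mu> \<Otimes>\<^sub>M \<mu>)"
proof -
  have gmu: "g \<in> borel_measurable \<mu>" "h \<in> borel_measurable \<mu>"
    by (subst measurable_cong_sets[OF sets_mu refl]; simp)+
  have S: "{p::(real^'n) \<times> (real^'n). dist (fst p) (snd p) < r} \<in> sets (\<mu> \<Otimes>\<^sub>M \<mu>)"
    using ball_pred_borel[of r] sets_pair_measure_cong[OF sets_mu sets_mu] by simp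
  have "(\<lambda>p::(real^'n)\<times>(real^'n). indicator {p. dist (fst p) (snd p) < r} p * g (snd p) * h (fst p)) \<in> borel_measurable (\<mu> \<Otimes>\<^sub>M \<mu>)"
    by (intro borel_measurable_times borel_measurable_indicator[OF S]
        measurable_compose[OF measurable_snd gmu(1)] measurable_compose[OF measurable_fst gmu(2)])
  then show ?thesis by (simp add: case_prod_beta' indicator_def)
qed

lemma avg_L2_nn:
  fixes f :: "real^'n \<Rightarrow> real"
  assumes [measurable]: "f \<in> borel_measurable borel" and sq: "integrable \<mu> (\<lambda>y. (f y)\<^sup>2)" and r: "r > 0"
  shows "(\<integral>\<^sup>+ z. ennreal ((avg r f z)\<^sup>2) \<partial>\<mu>) \<le> of_nat Kc * (\<integral>\<^sup>+ y. ennreal ((f y)\<^sup>2) \<partial>\<mu>)"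
proof -
  interpret P: pair_sigma_finite \<mu> \<mu>
    by (simp add: pair_sigma_finite_def sigma_finite_measure_axioms)
  define m where "m z = measure \<mu> (ball z r)" for z
  have [measurable]: "m \<in> borel_measurable borel" unfolding m_def by measurable
  have step1: "ennreal ((avg r f z)\<^sup>2) \<le> (\<integral>\<^sup>+ y. ennreal (indicator (ball z r) y * (f y)\<^sup>2 * inverse (m z)) \<partial>\<mu>)" for z
  proof -
    have i2: "integrable \<mu> (\<lambda>y. indicator (ball z r) y * (f y)\<^sup>2)"
      by (rule integrable_ind_mult[OF sq]) simp
    have "(avg r f z)\<^sup>2 \<le> (\<integral>y. indicator (ball z r) y * (f y)\<^sup>2 \<partial>\<mu>) * inverse (m z)"
      using avg_sq_le[OF assms(1) sq, of r z] by (simp add: m_def divide_inverse)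
    also have "\<dots> = (\<integral>y. indicator (ball z r) y * (f y)\<^sup>2 * inverse (m z) \<partial>\<mu>)"
      by simp
    finally have "ennreal ((avg r f z)\<^sup>2) \<le> ennreal (\<integral>y. indicator (ball z r) y * (f y)\<^sup>2 * inverse (m z) \<partial>\<mu>)"
      by (rule ennreal_leI)
    also have "\<dots> = (\<integral>\<^sup>+ y. ennreal (indicator (ball z r) y * (f y)\<^sup>2 * inverse (m z)) \<partial>\<mu>)"
      by (rule nn_integral_eq_integral[symmetric]) (use i2 in \<open>auto simp: m_def\<close>)
    finally show ?thesis .
  qed
  have "(\<integral>\<^sup>+ z. ennreal ((avg r f z)\<^sup>2) \<partial>\<mu>) \<le>
      (\<integral>\<^sup>+ z. (\<integral>\<^sup>+ y. ennreal (indicator (ball z r) y * (f y)\<^sup>2 * inverse (m z)) \<partial>\<mu>) \<partial>\<mu>)"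
    by (rule nn_integral_mono) (rule step1)
  also have "\<dots> = (\<integral>\<^sup>+ y. (\<integral>\<^sup>+ z. ennreal (indicator (ball z r) y * (f y)\<^sup>2 * inverse (m z)) \<partial>\<mu>) \<partial>\<mu>)"
  proof (rule P.Fubini'[symmetric])
    have "(\<lambda>(z,y). indicator (ball z r) y * (\<lambda>y. (f y)\<^sup>2) y * (\<lambda>z. inverse (m z)) z) \<in> borel_measurable (\<mu> \<Otimes>\<^sub>M \<mu>)"
      by (rule pair_ball_meas) measurable
    then show "(\<lambda>(z,y). ennreal (indicator (ball z r) y * (f y)\<^sup>2 * inverse (m z))) \<in> borel_measurable (\<mu> \<Otimes>\<^sub>M \<mu>)"
      by (simp add: case_prod_beta')
  qed
  also have "\<dots> \<le> (\<integral>\<^sup>+ y. ennreal ((f y)\<^sup>2) * of_nat Kc \<partial>\<mu>)"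
  proof (rule nn_integral_mono)
    fix y
    have "(\<integral>\<^sup>+ z. ennreal (indicator (ball z r) y * (f y)\<^sup>2 * inverse (m z)) \<partial>\<mu>)
        = (\<integral>\<^sup>+ z. ennreal ((f y)\<^sup>2) * ennreal (indicator (ball y r) z * inverse (m z)) \<partial>\<mu>)"
      by (intro nn_integral_cong) (auto simp: indicator_def dist_commute ennreal_mult'[symmetric] mult_ac)
    also have "\<dots> = ennreal ((f y)\<^sup>2) * (\<integral>\<^sup>+ z. ennreal (indicator (ball y r) z * inverse (m z)) \<partial>\<mu>)"
      by (rule nn_integral_cmult) measurable
    also have "\<dots> \<le> ennreal ((f y)\<^sup>2) * of_nat Kc"
      by (intro mult_left_mono) (use cover_bound[OF r, of y] in \<open>auto simp: m_def\<close>)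
    finally show "(\<integral>\<^sup>+ z. ennreal (indicator (ball z r) y * (f y)\<^sup>2 * inverse (m z)) \<partial>\<mu>) \<le> ennreal ((f y)\<^sup>2) * of_nat Kc" .
  qed
  also have "\<dots> = of_nat Kc * (\<integral>\<^sup>+ y. ennreal ((f y)\<^sup>2) \<partial>\<mu>)"
    by (subst nn_integral_multc) (auto simp: mult.commute)
  finally show ?thesis .
qed

lemma avg_L2:
  fixes f :: "real^'n \<Rightarrow> real"
  assumes [measurable]: "f \<in> borel_measurable borel" and sq: "integrable \<mu> (\<lambda>y. (f y)\<^sup>2)" and r: "r > 0"
  shows "integrable \<mu> (\<lambda>z. (avg r f z)\<^sup>2)"
    and "(\<integral>z. (avg r f z)\<^sup>2 \<partial>\<mu>) \<le> real Kc * (\<integral>y. (f y)\<^sup>2 \<partial>\<mu>)"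
proof -
  have nnf: "(\<integral>\<^sup>+ y. ennreal ((f y)\<^sup>2) \<partial>\<mu>) = ennreal (\<integral>y. (f y)\<^sup>2 \<partial>\<mu>)"
    by (rule nn_integral_eq_integral[OF sq]) auto
  have b: "(\<integral>\<^sup>+ z. ennreal ((avg r f z)\<^sup>2) \<partial>\<mu>) \<le> ennreal (real Kc * (\<integral>y. (f y)\<^sup>2 \<partial>\<mu>))"
    using avg_L2_nn[OF assms] unfolding nnf by (simp add: ennreal_mult ennreal_of_nat_eq_real_of_nat)
  show i: "integrable \<mu> (\<lambda>z. (avg r f z)\<^sup>2)"
  proof (rule integrableI_nonneg)
    show "(\<lambda>z. (avg r f z)\<^sup>2) \<in> borel_measurable \<mu>" by measurable
    show "AE x in \<mu>. 0 \<le> (avg r f x)\<^sup>2" by simp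
    show "(\<integral>\<^sup>+ z. ennreal ((avg r f z)\<^sup>2) \<partial>\<mu>) < \<infinity>" using b by (simp add: le_less_trans)
  qed
  have "ennreal (\<integral>z. (avg r f z)\<^sup>2 \<partial>\<mu>) = (\<integral>\<^sup>+ z. ennreal ((avg r f z)\<^sup>2) \<partial>\<mu>)"
    by (rule nn_integral_eq_integral[OF i, symmetric]) auto
  with b have "ennreal (\<integral>z. (avg r f z)\<^sup>2 \<partial>\<mu>) \<le> ennreal (real Kc * (\<integral>y. (f y)\<^sup>2 \<partial>\<mu>))" by simp
  moreover have "0 \<le> real Kc * (\<integral>y. (f y)\<^sup>2 \<partial>\<mu>)" by simp
  ultimately show "(\<integral>z. (avg r f z)\<^sup>2 \<partial>\<mu>) \<le> real Kc * (\<integral>y. (f y)\<^sup>2 \<partial>\<mu>)"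
    by (simp add: ennreal_le_iff)
qed

lemma ae_ball_pos:
  assumes r: "r > 0"
  shows "AE z in \<mu>. 0 < measure \<mu> (ball z r)"
proof -
  from countable_dense_setE obtain X :: "(real^'n) set"
    where X: "countable X" "\<And>Y :: (real^'n) set. open Y \<Longrightarrow> Y \<noteq> {} \<Longrightarrow> \<exists>d\<in>X. d \<in> Y"
    by auto
  define I where "I = {x\<in>X. measure \<mu> (ball x (r/2)) = 0}"
  have "(\<Union>x\<in>I. ball x (r/2)) \<in> null_sets \<mu>"
  proof (rule null_sets_UN')
    show "countable I" unfolding I_def using X(1) by simp
    fix x assume "x \<in> I"
    then show "ball x (r/2) \<in> null_sets \<mu>"
      by (intro null_setsI) (auto simp: I_def emeasure_eq_measure)
  qed
  moreover have "{z\<in>space \<mu>. \<not> 0 < measure \<mu> (ball z r)} \<subseteq> (\<Union>x\<in>I. ball x (r/2))"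
  proof
    fix z assume "z \<in> {z\<in>space \<mu>. \<not> 0 < measure \<mu> (ball z r)}"
    then have m0: "measure \<mu> (ball z r) = 0" using measure_nonneg[of \<mu> "ball z r"] by auto
    obtain x where x: "x \<in> X" "x \<in> ball z (r/2)" using X(2)[of "ball z (r/2)"] r by auto
    have sub: "ball x (r/2) \<subseteq> ball z r"
    proof
      fix w assume "w \<in> ball x (r/2)"
      then have "dist x w < r/2" by simp
      moreover have "dist z x < r/2" using x(2) by simp
      ultimately show "w \<in> ball z r" using dist_triangle[of z w x] by simp
    qed
    have "measure \<mu> (ball x (r/2)) \<le> measure \<mu> (ball z r)"
      using sub by (intro finite_measure_mono) auto
    then have "measure \<mu> (ball x (r/2)) = 0" using m0 measure_nonneg[of \<mu> "ball x (r/2)"] by linarith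
    then have "x \<in> I" using x by (simp add: I_def)
    moreover have "z \<in> ball x (r/2)" using x(2) by (simp add: dist_commute)
    ultimately show "z \<in> (\<Union>x\<in>I. ball x (r/2))" by blast
  qed
  ultimately show ?thesis by (rule AE_I')
qed

definition rk :: "nat \<Rightarrow> real" where "rk k = inverse (real (Suc k))"

lemma rk_pos: "rk k > 0" by (simp add: rk_def)

lemma rk_lim: "rk \<longlonglongrightarrow> 0"
  unfolding rk_def using LIMSEQ_inverse_real_of_nat by simp

lemma ae_ball_pos_all: "AE z in \<mu>. \<forall>k. 0 < measure \<mu> (ball z (rk k))"
  by (subst AE_all_countable) (simp add: ae_ball_pos rk_pos)

definition conv :: "(real^'n \<Rightarrow> real) \<Rightarrow> bool" where
  "conv f \<longleftrightarrow> (\<lambda>k. \<integral>z. (avg (rk k) f z - f z)\<^sup>2 \<partial>\<mu>) \<longlonglongrightarrow> 0"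

lemma avg_bounded:
  fixes f :: "real^'n \<Rightarrow> real"
  assumes [measurable]: "f \<in> borel_measurable borel" and B: "\<And>z. \<bar>f z\<bar> \<le> B"
  shows "\<bar>avg r f z\<bar> \<le> B"
proof -
  have B0: "0 \<le> B" using B[of z] by simp
  define m where "m = measure \<mu> (ball z r)"
  have fi: "integrable \<mu> (\<lambda>y. indicator (ball z r) y * f y)"
    by (rule finite_measure.integrable_const_bound[where B=B]) (auto simp: finite_measure_axioms indicator_def B B0)
  have "\<bar>\<integral>y. indicator (ball z r) y * f y \<partial>\<mu>\<bar> \<le> (\<integral>y. \<bar>indicator (ball z r) y * f y\<bar> \<partial>\<mu>)"
    by (rule integral_abs_bound)
  also have "\<dots> \<le> (\<integral>y. B * indicator (ball z r) y \<partial>\<mu>)"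
  proof (rule integral_mono)
    show "integrable \<mu> (\<lambda>y. \<bar>indicator (ball z r) y * f y\<bar>)" using fi by (rule integrable_abs)
    show "integrable \<mu> (\<lambda>y. B * indicator (ball z r) y)" by (simp add: less_top[symmetric])
  qed (auto simp: indicator_def B)
  also have "\<dots> = B * m" by (simp add: m_def)
  finally have "\<bar>\<integral>y. indicator (ball z r) y * f y \<partial>\<mu>\<bar> \<le> B * m" .
  then show ?thesis
    unfolding avg_def m_def[symmetric]
    by (cases "m = 0") (auto simp: B0 abs_divide divide_le_eq m_def)
qed

lemma avg_pointwise_cont:
  fixes f :: "real^'n \<Rightarrow> real"
  assumes c: "continuous_on UNIV f" and B: "\<And>z. \<bar>f z\<bar> \<le> B"
    and pos: "\<forall>k. 0 < measure \<mu> (ball z (rk k))"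
  shows "(\<lambda>k. avg (rk k) f z) \<longlonglongrightarrow> f z"
proof (rule metric_LIMSEQ_I)
  have [measurable]: "f \<in> borel_measurable borel" by (rule borel_measurable_continuous_onI[OF c])
  have B0: "0 \<le> B" using B[of z] by simp
  fix e :: real assume e: "e > 0"
  obtain d where d: "d > 0" "\<And>y. dist y z < d \<Longrightarrow> dist (f y) (f z) < e/2"
    using c e unfolding continuous_on_iff by (metis UNIV_I half_gt_zero)
  obtain N where N: "\<And>k. k \<ge> N \<Longrightarrow> rk k < d"
    using rk_lim d(1) unfolding lim_sequentially by (metis diff_zero norm_of_real real_norm_def dist_real_def abs_of_pos rk_pos)
  show "\<exists>no. \<forall>k\<ge>no. dist (avg (rk k) f z) (f z) < e"
  proof (intro exI allI impI)
    fix k assume k: "k \<ge> N"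
    define r where "r = rk k"
    define m where "m = measure \<mu> (ball z r)"
    have mpos: "m > 0" using pos unfolding m_def r_def by simp
    have fi: "integrable \<mu> (\<lambda>y. indicator (ball z r) y * f y)"
      by (rule finite_measure.integrable_const_bound[where B=B]) (auto simp: finite_measure_axioms indicator_def B B0)
    have "(\<integral>y. indicator (ball z r) y * (f y - f z) \<partial>\<mu>) = (\<integral>y. indicator (ball z r) y * f y - f z * indicator (ball z r) y \<partial>\<mu>)"
      by (simp add: algebra_simps)
    also have "\<dots> = (\<integral>y. indicator (ball z r) y * f y \<partial>\<mu>) - (\<integral>y. f z * indicator (ball z r) y \<partial>\<mu>)"
      by (rule Bochner_Integration.integral_diff[OF fi]) (simp add: less_top[symmetric])
    also have "\<dots> = (\<integral>y. indicator (ball z r) y * f y \<partial>\<mu>) - f z * m" by (simp add: m_def)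
    finally have "(\<integral>y. indicator (ball z r) y * f y \<partial>\<mu>) - f z * m = (\<integral>y. indicator (ball z r) y * (f y - f z) \<partial>\<mu>)" by simp
    also have "\<bar>\<dots>\<bar> \<le> (\<integral>y. \<bar>indicator (ball z r) y * (f y - f z)\<bar> \<partial>\<mu>)"
      by (rule integral_abs_bound)
    also have "\<dots> \<le> (\<integral>y. e/2 * indicator (ball z r) y \<partial>\<mu>)"
    proof (rule integral_mono)
      show "integrable \<mu> (\<lambda>y. \<bar>indicator (ball z r) y * (f y - f z)\<bar>)"
      proof (rule finite_measure.integrable_const_bound[where B="2*B"])
        show "AE x in \<mu>. norm \<bar>indicator (ball z r) x * (f x - f z)\<bar> \<le> 2*B"
        proof (rule AE_I2)
          fix x
          have "\<bar>f x - f z\<bar> \<le> 2*B" using B[of x] B[of z] by linarith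
          then show "norm \<bar>indicator (ball z r) x * (f x - f z)\<bar> \<le> 2*B"
            using B0 by (simp add: indicator_def)
        qed
      qed (auto simp: finite_measure_axioms)
      show "integrable \<mu> (\<lambda>y. e/2 * indicator (ball z r) y)" by (simp add: less_top[symmetric])
      fix y
      show "\<bar>indicator (ball z r) y * (f y - f z)\<bar> \<le> e/2 * indicator (ball z r) y"
      proof (cases "y \<in> ball z r")
        case True
        then have "dist y z < d" using N[OF k] unfolding r_def by (simp add: dist_commute)
        then have "\<bar>f y - f z\<bar> < e/2" using d(2) by (simp add: dist_real_def)
        then show ?thesis using True by simp
      qed simp
    qed
    also have "\<dots> = e/2 * m" by (simp add: m_def)
    finally have "\<bar>(\<integral>y. indicator (ball z r) y * f y \<partial>\<mu>) - f z * m\<bar> \<le> e/2 * m" .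
    moreover have "(\<integral>y. indicator (ball z r) y * f y \<partial>\<mu>) / m - f z = ((\<integral>y. indicator (ball z r) y * f y \<partial>\<mu>) - f z * m) / m"
      using mpos by (simp add: field_simps)
    ultimately have "\<bar>(\<integral>y. indicator (ball z r) y * f y \<partial>\<mu>) / m - f z\<bar> \<le> e/2"
      using mpos by (simp add: abs_divide divide_le_eq)
    then show "dist (avg (rk k) f z) (f z) < e"
      using e unfolding avg_def dist_real_def r_def[symmetric] m_def[symmetric] by simp
  qed
qed

lemma conv_cont:
  fixes f :: "real^'n \<Rightarrow> real"
  assumes c: "continuous_on UNIV f" and B: "\<And>z. \<bar>f z\<bar> \<le> B"
  shows "conv f"
proof -
  have [measurable]: "f \<in> borel_measurable borel" by (rule borel_measurable_continuous_onI[OF c])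
  have B0: "0 \<le> B" using B by (meson abs_ge_zero order_trans)
  have "(\<lambda>k. \<integral>z. (avg (rk k) f z - f z)\<^sup>2 \<partial>\<mu>) \<longlonglongrightarrow> (\<integral>z. 0 \<partial>\<mu>)"
  proof (rule integral_dominated_convergence[where w="\<lambda>_. (2*B)\<^sup>2"])
    show "(\<lambda>z. 0::real) \<in> borel_measurable \<mu>" by simp
    show "(\<lambda>z. (avg (rk k) f z - f z)\<^sup>2) \<in> borel_measurable \<mu>" for k by measurable
    show "integrable \<mu> (\<lambda>_. (2*B)\<^sup>2)" by simp
    show "AE z in \<mu>. (\<lambda>k. (avg (rk k) f z - f z)\<^sup>2) \<longlonglongrightarrow> 0"
      using ae_ball_pos_all
    proof (rule AE_mp, intro AE_I2 impI)
      fix z assume "\<forall>k. 0 < measure \<mu> (ball z (rk k))"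
      then have "(\<lambda>k. avg (rk k) f z) \<longlonglongrightarrow> f z" by (rule avg_pointwise_cont[OF c B])
      then have "(\<lambda>k. (avg (rk k) f z - f z)\<^sup>2) \<longlonglongrightarrow> (f z - f z)\<^sup>2"
        by (intro tendsto_intros)
      then show "(\<lambda>k. (avg (rk k) f z - f z)\<^sup>2) \<longlonglongrightarrow> 0" by simp
    qed
    show "AE z in \<mu>. norm ((avg (rk k) f z - f z)\<^sup>2) \<le> (2*B)\<^sup>2" for k
    proof (rule AE_I2)
      fix z
      have "\<bar>avg (rk k) f z\<bar> \<le> B"
        by (rule avg_bounded[OF borel_measurable_continuous_onI[OF c] B])
      then have "\<bar>avg (rk k) f z - f z\<bar> \<le> 2*B"
        using B[of z] by linarith
      then have "\<bar>avg (rk k) f z - f z\<bar>\<^sup>2 \<le> (2*B)\<^sup>2"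
        by (rule power_mono) simp
      then show "norm ((avg (rk k) f z - f z)\<^sup>2) \<le> (2*B)\<^sup>2"
        by simp
    qed
  qed
  then show ?thesis unfolding conv_def by simp
qed

lemma sq_sum_integrable:
  fixes f g :: "real^'n \<Rightarrow> real"
  assumes [measurable]: "f \<in> borel_measurable borel" "g \<in> borel_measurable borel"
    and "integrable \<mu> (\<lambda>y. (f y)\<^sup>2)" "integrable \<mu> (\<lambda>y. (g y)\<^sup>2)"
  shows "integrable \<mu> (\<lambda>y. (f y + g y)\<^sup>2)" "integrable \<mu> (\<lambda>y. (f y - g y)\<^sup>2)"
proof -
  have b: "(a + b)\<^sup>2 \<le> 2 * a\<^sup>2 + 2 * b\<^sup>2" "(a - b)\<^sup>2 \<le> 2 * a\<^sup>2 + 2 * b\<^sup>2" for a b :: real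
    using sum_squares_ge_zero[of "a - b" 0] sum_squares_ge_zero[of "a + b" 0]
    by (auto simp: power2_eq_square algebra_simps)
  have i: "integrable \<mu> (\<lambda>y. 2 * (f y)\<^sup>2 + 2 * (g y)\<^sup>2)" using assms(3,4) by simp
  show "integrable \<mu> (\<lambda>y. (f y + g y)\<^sup>2)"
    by (rule Bochner_Integration.integrable_bound[OF i]) (auto simp: b)
  show "integrable \<mu> (\<lambda>y. (f y - g y)\<^sup>2)"
    by (rule Bochner_Integration.integrable_bound[OF i]) (auto simp: b)
qed

lemma sq_cmult_integrable:
  fixes f :: "real^'n \<Rightarrow> real"
  assumes "integrable \<mu> (\<lambda>y. (f y)\<^sup>2)"
  shows "integrable \<mu> (\<lambda>y. (c * f y)\<^sup>2)"
  using integrable_mult_right[OF assms, of "c\<^sup>2"] by (simp add: power_mult_distrib)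

lemma avg_lin:
  fixes f g :: "real^'n \<Rightarrow> real"
  assumes "integrable \<mu> f" "integrable \<mu> g"
  shows "avg r (\<lambda>y. f y + g y) z = avg r f z + avg r g z"
    and "avg r (\<lambda>y. f y - g y) z = avg r f z - avg r g z"
proof -
  have i: "integrable \<mu> (\<lambda>y. indicator (ball z r) y * f y)" "integrable \<mu> (\<lambda>y. indicator (ball z r) y * g y)"
    using integrable_ind_mult assms by auto
  show "avg r (\<lambda>y. f y + g y) z = avg r f z + avg r g z"
    unfolding avg_def using Bochner_Integration.integral_add[OF i]
    by (simp add: distrib_left add_divide_distrib)
  show "avg r (\<lambda>y. f y - g y) z = avg r f z - avg r g z"
    unfolding avg_def using Bochner_Integration.integral_diff[OF i]
    by (simp add: right_diff_distrib diff_divide_distrib)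
qed

lemma avg_cmult: "avg r (\<lambda>y. c * f y) z = c * avg r f z"
  unfolding avg_def by (simp add: mult.left_commute)

lemma avg_zero: "avg r (\<lambda>y. 0) z = 0"
  unfolding avg_def by simp

lemma conv_integrable:
  fixes f :: "real^'n \<Rightarrow> real"
  assumes [measurable]: "f \<in> borel_measurable borel" and sq: "integrable \<mu> (\<lambda>y. (f y)\<^sup>2)" and r: "r > 0"
  shows "integrable \<mu> (\<lambda>z. (avg r f z - f z)\<^sup>2)"
  by (rule sq_sum_integrable(2)[OF avg_meas[OF assms(1)] assms(1) avg_L2(1)[OF assms] sq])

lemma conv_add:
  fixes f g :: "real^'n \<Rightarrow> real"
  assumes [measurable]: "f \<in> borel_measurable borel" "g \<in> borel_measurable borel"
    and sqf: "integrable \<mu> (\<lambda>y. (f y)\<^sup>2)" and sqg: "integrable \<mu> (\<lambda>y. (g y)\<^sup>2)"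
    and cf: "conv f" and cg: "conv g"
  shows "conv (\<lambda>y. f y + g y)"
proof -
  have fi: "integrable \<mu> f" "integrable \<mu> g"
    using sq_integrable_imp_integrable[OF assms(1) sqf] sq_integrable_imp_integrable[OF assms(2) sqg] by auto
  have b: "(a + b)\<^sup>2 \<le> 2 * a\<^sup>2 + 2 * b\<^sup>2" for a b :: real
    using sum_squares_ge_zero[of "a - b" 0] by (auto simp: power2_eq_square algebra_simps)
  have le: "(\<integral>z. (avg (rk k) (\<lambda>y. f y + g y) z - (f z + g z))\<^sup>2 \<partial>\<mu>)
      \<le> 2 * (\<integral>z. (avg (rk k) f z - f z)\<^sup>2 \<partial>\<mu>) + 2 * (\<integral>z. (avg (rk k) g z - g z)\<^sup>2 \<partial>\<mu>)" for k
  proof -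
    have eq: "avg (rk k) (\<lambda>y. f y + g y) z - (f z + g z) = (avg (rk k) f z - f z) + (avg (rk k) g z - g z)" for z
      using avg_lin(1)[OF fi, of "rk k" z] by simp
    have if': "integrable \<mu> (\<lambda>z. (avg (rk k) f z - f z)\<^sup>2)" "integrable \<mu> (\<lambda>z. (avg (rk k) g z - g z)\<^sup>2)"
      using conv_integrable[OF assms(1) sqf rk_pos] conv_integrable[OF assms(2) sqg rk_pos] by auto
    have "(\<integral>z. (avg (rk k) (\<lambda>y. f y + g y) z - (f z + g z))\<^sup>2 \<partial>\<mu>)
        \<le> (\<integral>z. 2 * (avg (rk k) f z - f z)\<^sup>2 + 2 * (avg (rk k) g z - g z)\<^sup>2 \<partial>\<mu>)"
    proof (rule integral_mono)
      show "integrable \<mu> (\<lambda>z. (avg (rk k) (\<lambda>y. f y + g y) z - (f z + g z))\<^sup>2)"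
        unfolding eq by (rule sq_sum_integrable(1)) (use if' in auto)
      show "integrable \<mu> (\<lambda>z. 2 * (avg (rk k) f z - f z)\<^sup>2 + 2 * (avg (rk k) g z - g z)\<^sup>2)"
        using if' by simp
      fix z
      show "(avg (rk k) (\<lambda>y. f y + g y) z - (f z + g z))\<^sup>2 \<le> 2 * (avg (rk k) f z - f z)\<^sup>2 + 2 * (avg (rk k) g z - g z)\<^sup>2"
        unfolding eq by (rule b)
    qed
    also have "\<dots> = 2 * (\<integral>z. (avg (rk k) f z - f z)\<^sup>2 \<partial>\<mu>) + 2 * (\<integral>z. (avg (rk k) g z - g z)\<^sup>2 \<partial>\<mu>)"
      using if' by simp
    finally show ?thesis .
  qed
  have "(\<lambda>k. 2 * (\<integral>z. (avg (rk k) f z - f z)\<^sup>2 \<partial>\<mu>) + 2 * (\<integral>z. (avg (rk k) g z - g z)\<^sup>2 \<partial>\<mu>)) \<longlonglongrightarrow> 2 * 0 + 2 * 0"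
    using cf cg unfolding conv_def by (intro tendsto_intros)
  then have lim: "(\<lambda>k. 2 * (\<integral>z. (avg (rk k) f z - f z)\<^sup>2 \<partial>\<mu>) + 2 * (\<integral>z. (avg (rk k) g z - g z)\<^sup>2 \<partial>\<mu>)) \<longlonglongrightarrow> 0"
    by simp
  show ?thesis unfolding conv_def
  proof (rule tendsto_sandwich[OF _ _ tendsto_const lim])
    show "\<forall>\<^sub>F k in sequentially. 0 \<le> (\<integral>z. (avg (rk k) (\<lambda>y. f y + g y) z - (f z + g z))\<^sup>2 \<partial>\<mu>)"
      by (intro always_eventually allI integral_nonneg_AE) simp
    show "\<forall>\<^sub>F k in sequentially. (\<integral>z. (avg (rk k) (\<lambda>y. f y + g y) z - (f z + g z))\<^sup>2 \<partial>\<mu>)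
       \<le> 2 * (\<integral>z. (avg (rk k) f z - f z)\<^sup>2 \<partial>\<mu>) + 2 * (\<integral>z. (avg (rk k) g z - g z)\<^sup>2 \<partial>\<mu>)"
      by (intro always_eventually allI le)
  qed
qed

lemma conv_cmult:
  fixes f :: "real^'n \<Rightarrow> real"
  assumes "conv f"
  shows "conv (\<lambda>y. c * f y)"
proof -
  have "(\<lambda>k. c\<^sup>2 * (\<integral>z. (avg (rk k) f z - f z)\<^sup>2 \<partial>\<mu>)) \<longlonglongrightarrow> c\<^sup>2 * 0"
    using assms unfolding conv_def by (intro tendsto_intros)
  moreover have "(\<integral>z. (avg (rk k) (\<lambda>y. c * f y) z - c * f z)\<^sup>2 \<partial>\<mu>) = c\<^sup>2 * (\<integral>z. (avg (rk k) f z - f z)\<^sup>2 \<partial>\<mu>)" for k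
  proof -
    have "(\<lambda>z. (avg (rk k) (\<lambda>y. c * f y) z - c * f z)\<^sup>2) = (\<lambda>z. c\<^sup>2 * (avg (rk k) f z - f z)\<^sup>2)"
      by (rule ext) (simp add: avg_cmult power_mult_distrib[symmetric] right_diff_distrib)
    then show ?thesis by simp
  qed
  ultimately show ?thesis unfolding conv_def by simp
qed

lemma conv_zero: "conv (\<lambda>y. 0)"
  unfolding conv_def by (simp add: avg_zero)


lemma conv_approx:
  fixes f :: "real^'n \<Rightarrow> real"
  assumes [measurable]: "f \<in> borel_measurable borel" and sqf: "integrable \<mu> (\<lambda>y. (f y)\<^sup>2)"
    and approx: "\<And>e. e > 0 \<Longrightarrow> \<exists>s. s \<in> borel_measurable borel \<and> integrable \<mu> (\<lambda>y. (s y)\<^sup>2) \<and> conv s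
                  \<and> (\<integral>y. (f y - s y)\<^sup>2 \<partial>\<mu>) < e"
  shows "conv f"
  unfolding conv_def
proof (rule LIMSEQ_I)
  fix e :: real assume e: "e > 0"
  define d where "d = e / (6 * (real Kc + 1))"
  have d: "d > 0" unfolding d_def using e by simp
  have Kp: "real Kc + 1 > 0" by simp
  have d3: "3 * (real Kc + 1) * d = e / 2" unfolding d_def using Kp by (simp add: field_simps)
  obtain s where s[measurable]: "s \<in> borel_measurable borel" and sqs: "integrable \<mu> (\<lambda>y. (s y)\<^sup>2)"
    and cs: "conv s" and fs: "(\<integral>y. (f y - s y)\<^sup>2 \<partial>\<mu>) < d"
    using approx[OF d] by blast
  obtain N where N: "\<And>k. k \<ge> N \<Longrightarrow> norm ((\<integral>z. (avg (rk k) s z - s z)\<^sup>2 \<partial>\<mu>) - 0) < e/6"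
    using LIMSEQ_D[OF cs[unfolded conv_def], of "e/6"] e by auto
  have fi: "integrable \<mu> f" "integrable \<mu> s"
    using sq_integrable_imp_integrable[OF assms(1) sqf] sq_integrable_imp_integrable[OF s sqs] by auto
  have sqfs: "integrable \<mu> (\<lambda>y. (f y - s y)\<^sup>2)" by (rule sq_sum_integrable(2)[OF assms(1) s sqf sqs])
  have b3: "(a + b + c)\<^sup>2 \<le> 3 * a\<^sup>2 + 3 * b\<^sup>2 + 3 * c\<^sup>2" for a b c :: real
    using sum_squares_ge_zero[of "a - b" "b - c"] sum_squares_ge_zero[of "a - c" 0]
    by (auto simp: power2_eq_square algebra_simps)
  show "\<exists>no. \<forall>k\<ge>no. norm ((\<integral>z. (avg (rk k) f z - f z)\<^sup>2 \<partial>\<mu>) - 0) < e"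
  proof (intro exI allI impI)
    fix k assume k: "k \<ge> N"
    define r where "r = rk k"
    have r: "r > 0" unfolding r_def by (rule rk_pos)
    have eq: "avg r f z - f z = avg r (\<lambda>y. f y - s y) z + (avg r s z - s z) + (s z - f z)" for z
      using avg_lin(2)[OF fi, of r z] by simp
    have i1: "integrable \<mu> (\<lambda>z. (avg r (\<lambda>y. f y - s y) z)\<^sup>2)"
      by (rule avg_L2(1)[OF _ sqfs r]) measurable
    have i2: "integrable \<mu> (\<lambda>z. (avg r s z - s z)\<^sup>2)" by (rule conv_integrable[OF s sqs r])
    have i3: "integrable \<mu> (\<lambda>z. (s z - f z)\<^sup>2)" by (rule sq_sum_integrable(2)[OF s assms(1) sqs sqf])
    have i0: "integrable \<mu> (\<lambda>z. (avg r f z - f z)\<^sup>2)" by (rule conv_integrable[OF assms(1) sqf r])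
    have "(\<integral>z. (avg r f z - f z)\<^sup>2 \<partial>\<mu>) \<le>
        (\<integral>z. 3 * (avg r (\<lambda>y. f y - s y) z)\<^sup>2 + 3 * (avg r s z - s z)\<^sup>2 + 3 * (s z - f z)\<^sup>2 \<partial>\<mu>)"
    proof (rule integral_mono[OF i0])
      show "integrable \<mu> (\<lambda>z. 3 * (avg r (\<lambda>y. f y - s y) z)\<^sup>2 + 3 * (avg r s z - s z)\<^sup>2 + 3 * (s z - f z)\<^sup>2)"
        using i1 i2 i3 by simp
      fix z show "(avg r f z - f z)\<^sup>2 \<le> 3 * (avg r (\<lambda>y. f y - s y) z)\<^sup>2 + 3 * (avg r s z - s z)\<^sup>2 + 3 * (s z - f z)\<^sup>2"
        unfolding eq by (rule b3)
    qed
    also have "\<dots> = 3 * (\<integral>z. (avg r (\<lambda>y. f y - s y) z)\<^sup>2 \<partial>\<mu>) + 3 * (\<integral>z. (avg r s z - s z)\<^sup>2 \<partial>\<mu>) + 3 * (\<integral>z. (s z - f z)\<^sup>2 \<partial>\<mu>)"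
      using i1 i2 i3 by simp
    also have "(\<integral>z. (s z - f z)\<^sup>2 \<partial>\<mu>) = (\<integral>z. (f z - s z)\<^sup>2 \<partial>\<mu>)"
      by (simp add: power2_commute)
    also have "(\<integral>z. (avg r (\<lambda>y. f y - s y) z)\<^sup>2 \<partial>\<mu>) \<le> real Kc * (\<integral>z. (f z - s z)\<^sup>2 \<partial>\<mu>)"
      by (rule avg_L2(2)[OF _ sqfs r]) measurable
    also have "(\<integral>z. (avg r s z - s z)\<^sup>2 \<partial>\<mu>) < e/6"
      using N[OF k] unfolding r_def by (simp add: abs_less_iff)
    finally have "(\<integral>z. (avg r f z - f z)\<^sup>2 \<partial>\<mu>) < 3 * (real Kc * (\<integral>z. (f z - s z)\<^sup>2 \<partial>\<mu>)) + 3 * (e/6) + 3 * (\<integral>z. (f z - s z)\<^sup>2 \<partial>\<mu>)"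
      by simp
    also have "\<dots> = 3 * (real Kc + 1) * (\<integral>z. (f z - s z)\<^sup>2 \<partial>\<mu>) + e/2" by (simp add: algebra_simps)
    also have "\<dots> \<le> 3 * (real Kc + 1) * d + e/2"
      using fs by (intro add_right_mono mult_left_mono) auto
    also have "\<dots> = e" using d3 by simp
    finally have lt: "(\<integral>z. (avg r f z - f z)\<^sup>2 \<partial>\<mu>) < e" .
    have "0 \<le> (\<integral>z. (avg r f z - f z)\<^sup>2 \<partial>\<mu>)" by (intro integral_nonneg_AE) simp
    then show "norm ((\<integral>z. (avg (rk k) f z - f z)\<^sup>2 \<partial>\<mu>) - 0) < e"
      using lt unfolding r_def by simp
  qed
qed

lemma conv_sum:
  fixes F :: "'i \<Rightarrow> real^'n \<Rightarrow> real"
  assumes "finite A"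
    and "\<And>i. i \<in> A \<Longrightarrow> F i \<in> borel_measurable borel \<and> integrable \<mu> (\<lambda>z. (F i z)\<^sup>2) \<and> conv (F i)"
  shows "(\<lambda>z. \<Sum>i\<in>A. F i z) \<in> borel_measurable borel \<and> integrable \<mu> (\<lambda>z. (\<Sum>i\<in>A. F i z)\<^sup>2) \<and> conv (\<lambda>z. \<Sum>i\<in>A. F i z)"
  using assms
proof (induction A rule: finite_induct)
  case empty
  then show ?case using conv_zero by simp
next
  case (insert x A)
  then have IH: "(\<lambda>z. \<Sum>i\<in>A. F i z) \<in> borel_measurable borel" "integrable \<mu> (\<lambda>z. (\<Sum>i\<in>A. F i z)\<^sup>2)"
      "conv (\<lambda>z. \<Sum>i\<in>A. F i z)" by auto
  have Fx: "F x \<in> borel_measurable borel" "integrable \<mu> (\<lambda>z. (F x z)\<^sup>2)" "conv (F x)"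
    using insert.prems by auto
  have eq: "(\<Sum>i\<in>insert x A. F i z) = F x z + (\<Sum>i\<in>A. F i z)" for z
    using insert.hyps by simp
  show ?case unfolding eq
  proof (intro conjI)
    show "(\<lambda>z. F x z + (\<Sum>i\<in>A. F i z)) \<in> borel_measurable borel"
      using Fx(1) IH(1) by (rule borel_measurable_add)
    show "integrable \<mu> (\<lambda>z. (F x z + (\<Sum>i\<in>A. F i z))\<^sup>2)"
      by (rule sq_sum_integrable(1)[OF Fx(1) IH(1) Fx(2) IH(2)])
    show "conv (\<lambda>z. F x z + (\<Sum>i\<in>A. F i z))"
      by (rule conv_add[OF Fx(1) IH(1) Fx(2) IH(2) Fx(3) IH(3)])
  qed
qed

lemma conv_indicator:
  assumes B: "B \<in> sets borel"
  shows "conv (indicator B :: real^'n \<Rightarrow> real)"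
proof (rule conv_approx)
  show "(indicator B :: real^'n \<Rightarrow> real) \<in> borel_measurable borel" using B by simp
  have "(\<lambda>y. (indicator B y :: real)\<^sup>2) = indicator B" by (auto simp: indicator_def)
  then show "integrable \<mu> (\<lambda>y. (indicator B y :: real)\<^sup>2)"
    using B by (simp add: less_top[symmetric] sets_mu)
  fix e :: real assume e: "e > 0"
  have fin: "emeasure \<mu> (space \<mu>) \<noteq> \<infinity>" by simp
  have Bmu: "B \<in> sets \<mu>" using B by (simp add: sets_mu)
  obtain K where K: "compact K" "K \<subseteq> B" "measure \<mu> B < measure \<mu> K + e/2"
  proof (cases "measure \<mu> B < e/2")
    case True
    then show ?thesis using that[of "{}"] by simp
  next
    case False
    have "ennreal (measure \<mu> B - e/2) < emeasure \<mu> B"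
      using False e by (simp add: emeasure_eq_measure ennreal_less_iff)
    also have "\<dots> = (SUP K \<in> {K. K \<subseteq> B \<and> compact K}. emeasure \<mu> K)"
      by (rule inner_regular[OF sets_mu fin B])
    finally obtain K where "K \<subseteq> B" "compact K" "ennreal (measure \<mu> B - e/2) < emeasure \<mu> K"
      by (auto simp: less_SUP_iff)
    moreover have "K \<in> sets \<mu>" using \<open>compact K\<close> by (simp add: sets_mu compact_imp_closed borel_closed)
    ultimately show ?thesis using that[of K] False e
      by (auto simp: emeasure_eq_measure ennreal_less_iff)
  qed
  obtain U where U: "open U" "B \<subseteq> U" "measure \<mu> U < measure \<mu> B + e/2"
  proof -
    have "(INF U \<in> {U. B \<subseteq> U \<and> open U}. emeasure \<mu> U) = emeasure \<mu> B"
      by (rule outer_regular[OF sets_mu fin B, symmetric])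
    also have "\<dots> < ennreal (measure \<mu> B + e/2)"
      using e by (simp add: emeasure_eq_measure ennreal_less_iff)
    finally obtain U where "B \<subseteq> U" "open U" "emeasure \<mu> U < ennreal (measure \<mu> B + e/2)"
      by (auto simp: INF_less_iff)
    moreover have "U \<in> sets \<mu>" using \<open>open U\<close> by (simp add: sets_mu)
    ultimately have "ennreal (measure \<mu> U) < ennreal (measure \<mu> B + e/2)" "B \<subseteq> U" "open U"
      by (auto simp only: emeasure_eq_measure)
    then show ?thesis using that[of U] by (metis ennreal_less_iff measure_nonneg)
  qed
  have Kc: "closed K" using K(1) by (rule compact_imp_closed)
  have Uc: "closed (- U)" using U(1) by auto
  have disj: "K \<inter> - U = {}" using K(2) U(2) by auto
  obtain \<phi> :: "real^'n \<Rightarrow> real" where phi: "continuous_on UNIV \<phi>" "\<And>x. \<phi> x \<in> closed_segment 1 0"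
      "\<And>x. x \<in> K \<Longrightarrow> \<phi> x = 1" "\<And>x. x \<in> - U \<Longrightarrow> \<phi> x = 0"
    using Urysohn[OF Kc Uc disj, of 1 0] by blast
  have phi01: "0 \<le> \<phi> x \<and> \<phi> x \<le> 1" for x using phi(2)[of x] by (simp add: closed_segment_eq_real_ivl)
  have [measurable]: "\<phi> \<in> borel_measurable borel" by (rule borel_measurable_continuous_onI[OF phi(1)])
  have Ks: "K \<in> sets \<mu>" using Kc by (simp add: sets_mu borel_closed)
  have Us: "U \<in> sets \<mu>" using U(1) by (simp add: sets_mu)
  show "\<exists>s. s \<in> borel_measurable borel \<and> integrable \<mu> (\<lambda>y. (s y)\<^sup>2) \<and> conv s \<and>
      (\<integral>y. (indicator B y - s y)\<^sup>2 \<partial>\<mu>) < e"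
  proof (intro exI conjI)
    show "\<phi> \<in> borel_measurable borel" by simp
    show "integrable \<mu> (\<lambda>y. (\<phi> y)\<^sup>2)"
      by (rule finite_measure.integrable_const_bound[where B=1]) (auto simp: finite_measure_axioms phi01 abs_le_square_iff power_le_one)
    show "conv \<phi>" by (rule conv_cont[OF phi(1), of 1]) (use phi01 in auto)
    have "(\<integral>y. (indicator B y - \<phi> y)\<^sup>2 \<partial>\<mu>) \<le> (\<integral>y. indicator (U - K) y \<partial>\<mu>)"
    proof (rule integral_mono)
      show "integrable \<mu> (\<lambda>y. (indicator B y - \<phi> y)\<^sup>2)"
        apply (rule finite_measure.integrable_const_bound[where B=1])
          apply (simp add: finite_measure_axioms)
         apply (auto simp: indicator_def phi01 abs_le_square_iff power_le_one)[1]
        using Bmu apply measurable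
        done
      show "integrable \<mu> (indicator (U - K) :: _ \<Rightarrow> real)"
        using Us Ks by (simp add: less_top[symmetric])
      fix y
      show "(indicator B y - \<phi> y)\<^sup>2 \<le> indicator (U - K) y"
      proof (cases "y \<in> K")
        case True then show ?thesis using K(2) phi(3) by (simp add: indicator_def subset_eq)
      next
        case nK: False
        show ?thesis
        proof (cases "y \<in> U")
          case True
          have "\<bar>indicator B y - \<phi> y\<bar> \<le> 1" using phi01[of y] by (auto simp: indicator_def)
          then have "(indicator B y - \<phi> y)\<^sup>2 \<le> 1"
            by (metis abs_le_square_iff abs_one one_power2)
          then show ?thesis using True nK by simp
        next
          case False
          then show ?thesis using U(2) phi(4)[of y] nK by (auto simp: indicator_def)
        qed
      qed
    qed
    also have "\<dots> = measure \<mu> (U - K)" using Us Ks by simp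
    also have "\<dots> = measure \<mu> U - measure \<mu> K"
      using K(2) U(2) Us Ks by (intro finite_measure_Diff) auto
    also have "\<dots> < e" using K(3) U(3) by simp
    finally show "(\<integral>y. (indicator B y - \<phi> y)\<^sup>2 \<partial>\<mu>) < e" .
  qed
qed

lemma conv_all:
  fixes f :: "real^'n \<Rightarrow> real"
  assumes fm[measurable]: "f \<in> borel_measurable borel" and sqf: "integrable \<mu> (\<lambda>y. (f y)\<^sup>2)"
  shows "conv f"
proof (rule conv_approx[OF assms])
  fix e :: real assume e: "e > 0"
  obtain F where F: "\<forall>i. simple_function borel (F i)" "\<forall>x\<in>space borel. (\<lambda>i. F i x) \<longlonglongrightarrow> f x"
      "\<forall>i. \<forall>x\<in>space borel. dist (F i x) 0 \<le> 2 * dist (f x) 0"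
    using borel_measurable_implies_sequence_metric[OF fm, of 0] by blast
  have Fm[measurable]: "F i \<in> borel_measurable borel" for i
    using F(1) by (simp add: borel_measurable_simple_function)
  have Fb: "\<bar>F i x\<bar> \<le> 2 * \<bar>f x\<bar>" for i x using F(3) by simp
  have sqF: "integrable \<mu> (\<lambda>y. (F i y)\<^sup>2)" for i
  proof (rule Bochner_Integration.integrable_bound[of _ "\<lambda>y. 4 * (f y)\<^sup>2"])
    show "integrable \<mu> (\<lambda>y. 4 * (f y)\<^sup>2)" using sqf by simp
    show "(\<lambda>y. (F i y)\<^sup>2) \<in> borel_measurable \<mu>" by measurable
    show "AE x in \<mu>. norm ((F i x)\<^sup>2) \<le> norm (4 * (f x)\<^sup>2)"
    proof (rule AE_I2)
      fix x
      have "\<bar>F i x\<bar>\<^sup>2 \<le> (2 * \<bar>f x\<bar>)\<^sup>2" by (rule power_mono[OF Fb]) simp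
      then show "norm ((F i x)\<^sup>2) \<le> norm (4 * (f x)\<^sup>2)" by (simp add: power_mult_distrib)
    qed
  qed
  have "(\<lambda>i. \<integral>y. (f y - F i y)\<^sup>2 \<partial>\<mu>) \<longlonglongrightarrow> (\<integral>y. 0 \<partial>\<mu>)"
  proof (rule integral_dominated_convergence[where w="\<lambda>y. 9 * (f y)\<^sup>2"])
    show "(\<lambda>y. 0::real) \<in> borel_measurable \<mu>" by simp
    show "(\<lambda>y. (f y - F i y)\<^sup>2) \<in> borel_measurable \<mu>" for i by measurable
    show "integrable \<mu> (\<lambda>y. 9 * (f y)\<^sup>2)" using sqf by simp
    show "AE y in \<mu>. (\<lambda>i. (f y - F i y)\<^sup>2) \<longlonglongrightarrow> 0"
    proof (rule AE_I2)
      fix y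
      have "(\<lambda>i. F i y) \<longlonglongrightarrow> f y" using F(2) by simp
      then have "(\<lambda>i. (f y - F i y)\<^sup>2) \<longlonglongrightarrow> (f y - f y)\<^sup>2" by (intro tendsto_intros)
      then show "(\<lambda>i. (f y - F i y)\<^sup>2) \<longlonglongrightarrow> 0" by simp
    qed
    show "AE y in \<mu>. norm ((f y - F i y)\<^sup>2) \<le> 9 * (f y)\<^sup>2" for i
    proof (rule AE_I2)
      fix y
      have "\<bar>f y - F i y\<bar> \<le> 3 * \<bar>f y\<bar>" using Fb[of i y] by linarith
      then have "\<bar>f y - F i y\<bar>\<^sup>2 \<le> (3 * \<bar>f y\<bar>)\<^sup>2" by (rule power_mono) simp
      then show "norm ((f y - F i y)\<^sup>2) \<le> 9 * (f y)\<^sup>2" by (simp add: power_mult_distrib)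
    qed
  qed
  then have lim0: "(\<lambda>i. \<integral>y. (f y - F i y)\<^sup>2 \<partial>\<mu>) \<longlonglongrightarrow> 0" by simp
  from LIMSEQ_D[OF lim0 e] obtain N where N: "\<And>n. n \<ge> N \<Longrightarrow> norm ((\<integral>y. (f y - F n y)\<^sup>2 \<partial>\<mu>) - 0) < e"
    by blast
  define i where "i = N"
  have i: "\<bar>(\<integral>y. (f y - F i y)\<^sup>2 \<partial>\<mu>)\<bar> < e" using N[of N] unfolding i_def by simp
  have fin: "finite (F i ` UNIV)" using F(1) by (simp add: simple_function_def)
  have rep: "F i x = (\<Sum>v\<in>F i ` UNIV. v * indicator (F i -` {v}) x)" for x
  proof -
    have "F i x = (\<Sum>v\<in>F i ` UNIV. indicator (F i -` {v}) x *\<^sub>R v)"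
      using simple_function_indicator_representation_banach[OF F(1)[rule_format, of i], of x]
      by (simp only: space_borel Int_UNIV_right UNIV_I)
    also have "\<dots> = (\<Sum>v\<in>F i ` UNIV. v * indicator (F i -` {v}) x)"
      by (intro sum.cong refl) simp
    finally show ?thesis .
  qed
  have pre: "F i -` {v} \<in> sets borel" for v
    using measurable_sets[OF Fm[of i], of "{v}"] by simp
  have "(\<lambda>z. \<Sum>v\<in>F i ` UNIV. v * indicator (F i -` {v}) z) \<in> borel_measurable borel \<and>
      integrable \<mu> (\<lambda>z. (\<Sum>v\<in>F i ` UNIV. v * indicator (F i -` {v}) z)\<^sup>2) \<and>
      conv (\<lambda>z. \<Sum>v\<in>F i ` UNIV. v * indicator (F i -` {v}) z)"
  proof (rule conv_sum[OF fin])
    fix v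
    have ind: "integrable \<mu> (\<lambda>z. (indicator (F i -` {v}) z :: real)\<^sup>2)"
    proof -
      have "(\<lambda>z. (indicator (F i -` {v}) z :: real)\<^sup>2) = indicator (F i -` {v})" by (auto simp: indicator_def)
      then show ?thesis using pre by (simp add: less_top[symmetric] sets_mu)
    qed
    show "(\<lambda>z. v * indicator (F i -` {v}) z) \<in> borel_measurable borel \<and>
        integrable \<mu> (\<lambda>z. (v * indicator (F i -` {v}) z)\<^sup>2) \<and> conv (\<lambda>z. v * indicator (F i -` {v}) z)"
      using pre sq_cmult_integrable[OF ind, of v] conv_cmult[OF conv_indicator[OF pre], of v] by simp
  qed
  moreover have eqF: "F i = (\<lambda>z. \<Sum>v\<in>F i ` UNIV. v * indicator (F i -` {v}) z)"
    by (rule ext) (rule rep)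
  ultimately have cF: "conv (F i)" by (simp only: eqF[symmetric])
  have lt: "(\<integral>y. (f y - F i y)\<^sup>2 \<partial>\<mu>) < e" by (rule le_less_trans[OF abs_ge_self i])
  show "\<exists>s. s \<in> borel_measurable borel \<and> integrable \<mu> (\<lambda>y. (s y)\<^sup>2) \<and> conv s \<and> (\<integral>y. (f y - s y)\<^sup>2 \<partial>\<mu>) < e"
    by (rule exI[of _ "F i"]) (intro conjI Fm sqF cF lt)
qed

end



lemma measurable_vec_lambda:
  fixes f :: "'a \<Rightarrow> 'n::finite \<Rightarrow> real"
  assumes "\<And>i. (\<lambda>x. f x i) \<in> borel_measurable M"
  shows "(\<lambda>x. (\<chi> i. f x i) :: real^'n) \<in> borel_measurable M"
proof (rule borel_measurable_euclidean_space[THEN iffD2], intro ballI)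
  fix b :: "real^'n" assume "b \<in> Basis"
  then obtain i u where u: "u \<in> (Basis :: real set)" and b: "b = axis i u"
    unfolding Basis_vec_def by blast
  have u1: "u = 1" using u by simp
  have "(\<lambda>x. (\<chi> i. f x i) \<bullet> b) = (\<lambda>x. f x i)"
  proof
    fix x
    show "(\<chi> i. f x i) \<bullet> b = f x i"
      unfolding b u1 inner_axis by simp
  qed
  then show "(\<lambda>x. (\<chi> i. f x i) \<bullet> b) \<in> borel_measurable M" using assms by (simp only:)
qed

lemma measurable_vec_nth[measurable]:
  fixes f :: "'a \<Rightarrow> real^'n"
  assumes "f \<in> borel_measurable M"
  shows "(\<lambda>x. f x $ i) \<in> borel_measurable M"
  using measurable_compose[OF assms borel_measurable_continuous_onI[of "\<lambda>x::real^'n. x $ i"]]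
  by (simp add: continuous_on_component)

lemma norm_sq_vec: "(norm (x::real^'n))\<^sup>2 = (\<Sum>i\<in>UNIV. (x $ i)\<^sup>2)"
  unfolding power2_norm_eq_inner inner_vec_def by (simp add: power2_eq_square)

lemma Zt_cont: "continuous_on UNIV (Zt t :: (real^'n) \<times> (real^'n) \<Rightarrow> real^'n)"
proof -
  have "Zt t = (\<lambda>p::(real^'n) \<times> (real^'n). (1 - t) *\<^sub>R fst p + t *\<^sub>R snd p)"
    by (rule ext) (simp add: Zt_def case_prod_beta)
  then show ?thesis by (simp only:) (intro continuous_intros)
qed

lemma Udisp_cont: "continuous_on UNIV (Udisp :: (real^'n) \<times> (real^'n) \<Rightarrow> real^'n)"
  unfolding Udisp_def case_prod_beta by (intro continuous_intros)

locale setting =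
  fixes G :: "(real^'n^'n) set" and \<gamma> :: "((real^'n) \<times> (real^'n)) measure"
    and t :: real and vstar :: "real^'n \<Rightarrow> real^'n"
  assumes G: "compact_orth_group G"
    and P: "prob_space \<gamma>"
    and S: "sets \<gamma> = sets borel"
    and i1: "integrable \<gamma> (\<lambda>(x, y). (norm x)\<^sup>2)"
    and i2: "integrable \<gamma> (\<lambda>(x, y). (norm y)\<^sup>2)"
    and inv: "\<forall>g\<in>G. distr \<gamma> borel (\<lambda>(x, y). (g *v x, g *v y)) = \<gamma>"
    and tt: "t \<in> {0..1}"
    and bayes: "bayes_regressor \<gamma> t vstar"
begin

sublocale prob_space \<gamma> by (rule P)

lemma space_g: "space \<gamma> = UNIV"
  using sets_eq_imp_space_eq[OF S] by simp

lemma Z_borel[measurable]: "Zt t \<in> borel_measurable borel"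
  by (rule borel_measurable_continuous_onI[OF Zt_cont])

lemma U_borel[measurable]: "Udisp \<in> borel_measurable borel"
  by (rule borel_measurable_continuous_onI[OF Udisp_cont])

lemma Z_meas[measurable]: "Zt t \<in> borel_measurable \<gamma>"
  by (subst measurable_cong_sets[OF S refl]) simp

lemma U_meas[measurable]: "Udisp \<in> borel_measurable \<gamma>"
  by (subst measurable_cong_sets[OF S refl]) simp

lemma vstar_meas[measurable]: "vstar \<in> borel_measurable borel"
  using bayes unfolding bayes_regressor_def by simp

lemma subalg: "subalgebra \<gamma> (sigZ \<gamma> t)"
  unfolding subalgebra_def sigZ_def
proof
  show "space (vimage_algebra (space \<gamma>) (Zt t) borel) = space \<gamma>" by simp
  show "sets (vimage_algebra (space \<gamma>) (Zt t) borel) \<subseteq> sets \<gamma>"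
  proof (subst sets_vimage_algebra2)
    show "Zt t \<in> space \<gamma> \<rightarrow> space borel" by simp
    show "{Zt t -` A \<inter> space \<gamma> |A. A \<in> sets borel} \<subseteq> sets \<gamma>"
    proof
      fix X assume "X \<in> {Zt t -` A \<inter> space \<gamma> |A. A \<in> sets borel}"
      then obtain A where "A \<in> sets borel" "X = Zt t -` A \<inter> space \<gamma>" by blast
      then show "X \<in> sets \<gamma>" using measurable_sets[OF Z_meas] by simp
    qed
  qed
qed

lemma sfs: "sigma_finite_subalgebra \<gamma> (sigZ \<gamma> t)"
  by (rule finite_measure_subalgebra_is_sigma_finite, rule finite_measure_subalgebra.intro)
     (simp add: finite_measure_axioms, rule finite_measure_subalgebra_axioms.intro[OF subalg])


lemma Z_F: "Zt t \<in> sigZ \<gamma> t \<rightarrow>\<^sub>M borel"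
  unfolding sigZ_def by (rule measurable_vimage_algebra1) simp

lemma comp_F:
  fixes h :: "real^'n \<Rightarrow> 'b::topological_space"
  assumes "h \<in> borel_measurable borel"
  shows "(\<lambda>\<omega>. h (Zt t \<omega>)) \<in> borel_measurable (sigZ \<gamma> t)"
  using measurable_compose[OF Z_F assms] .

definition c :: "'n \<Rightarrow> (real^'n) \<times> (real^'n) \<Rightarrow> real" where
  "c i = real_cond_exp \<gamma> (sigZ \<gamma> t) (\<lambda>\<omega>. Udisp \<omega> $ i)"

lemma U_sq: "integrable \<gamma> (\<lambda>\<omega>. (norm (Udisp \<omega>))\<^sup>2)"
proof (rule Bochner_Integration.integrable_bound[of _ "\<lambda>\<omega>. 2 * (norm (fst \<omega>))\<^sup>2 + 2 * (norm (snd \<omega>))\<^sup>2"])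
  have e1: "(\<lambda>(x, y). (norm x)\<^sup>2) = (\<lambda>\<omega>::(real^'n)\<times>(real^'n). (norm (fst \<omega>))\<^sup>2)" by (rule ext) (simp add: case_prod_beta)
  have e2: "(\<lambda>(x, y). (norm y)\<^sup>2) = (\<lambda>\<omega>::(real^'n)\<times>(real^'n). (norm (snd \<omega>))\<^sup>2)" by (rule ext) (simp add: case_prod_beta)
  have j1: "integrable \<gamma> (\<lambda>\<omega>. (norm (fst \<omega>))\<^sup>2)" using i1 unfolding e1 .
  have j2: "integrable \<gamma> (\<lambda>\<omega>. (norm (snd \<omega>))\<^sup>2)" using i2 unfolding e2 .
  show "integrable \<gamma> (\<lambda>\<omega>. 2 * (norm (fst \<omega>))\<^sup>2 + 2 * (norm (snd \<omega>))\<^sup>2)"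
    using j1 j2 by (intro Bochner_Integration.integrable_add integrable_mult_right)
  show "(\<lambda>\<omega>. (norm (Udisp \<omega>))\<^sup>2) \<in> borel_measurable \<gamma>" by measurable
  show "AE \<omega> in \<gamma>. norm ((norm (Udisp \<omega>))\<^sup>2) \<le> norm (2 * (norm (fst \<omega>))\<^sup>2 + 2 * (norm (snd \<omega>))\<^sup>2)"
  proof (rule AE_I2)
    fix \<omega> :: "(real^'n) \<times> (real^'n)"
    obtain x y where w: "\<omega> = (x, y)" by (cases \<omega>)
    have "norm (y - x) \<le> norm x + norm y" by (metis add.commute norm_triangle_ineq4)
    then have "(norm (y - x))\<^sup>2 \<le> (norm x + norm y)\<^sup>2" by (rule power_mono) simp
    also have "\<dots> \<le> 2 * (norm x)\<^sup>2 + 2 * (norm y)\<^sup>2"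
      using sum_squares_ge_zero[of "norm x - norm y" 0] by (simp add: power2_eq_square algebra_simps)
    finally show "norm ((norm (Udisp \<omega>))\<^sup>2) \<le> norm (2 * (norm (fst \<omega>))\<^sup>2 + 2 * (norm (snd \<omega>))\<^sup>2)"
      by (simp add: w Udisp_def)
  qed
qed

lemma Ui_sq: "integrable \<gamma> (\<lambda>\<omega>. (Udisp \<omega> $ i)\<^sup>2)"
proof (rule Bochner_Integration.integrable_bound[OF U_sq])
  show "(\<lambda>\<omega>. (Udisp \<omega> $ i)\<^sup>2) \<in> borel_measurable \<gamma>" by measurable
  show "AE \<omega> in \<gamma>. norm ((Udisp \<omega> $ i)\<^sup>2) \<le> norm ((norm (Udisp \<omega>))\<^sup>2)"
  proof (rule AE_I2)
    fix \<omega>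
    have "\<bar>Udisp \<omega> $ i\<bar>\<^sup>2 \<le> (norm (Udisp \<omega>))\<^sup>2" by (rule power_mono[OF component_le_norm_cart]) simp
    then show "norm ((Udisp \<omega> $ i)\<^sup>2) \<le> norm ((norm (Udisp \<omega>))\<^sup>2)" by simp
  qed
qed

lemma sq_int_imp_int:
  fixes f :: "(real^'n) \<times> (real^'n) \<Rightarrow> real"
  assumes [measurable]: "f \<in> borel_measurable \<gamma>" and sq: "integrable \<gamma> (\<lambda>y. (f y)\<^sup>2)"
  shows "integrable \<gamma> f"
proof (rule Bochner_Integration.integrable_bound[of _ "\<lambda>y. 1 + (f y)\<^sup>2"])
  show "integrable \<gamma> (\<lambda>y. 1 + (f y)\<^sup>2)" using sq by simp
  show "f \<in> borel_measurable \<gamma>" by measurable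
  show "AE x in \<gamma>. norm (f x) \<le> norm (1 + (f x)\<^sup>2)"
  proof (rule AE_I2)
    fix x
    have "0 \<le> (\<bar>f x\<bar> - 1)\<^sup>2" by simp
    moreover have "(\<bar>f x\<bar> - 1)\<^sup>2 = (f x)\<^sup>2 - 2*\<bar>f x\<bar> + 1"
      by (simp add: power2_diff)
    moreover have "0 \<le> (f x)\<^sup>2" by simp
    ultimately have "\<bar>f x\<bar> \<le> 1 + (f x)\<^sup>2" by linarith
    then show "norm (f x) \<le> norm (1 + (f x)\<^sup>2)" by simp
  qed
qed

lemma prod_int:
  fixes f g :: "(real^'n) \<times> (real^'n) \<Rightarrow> real"
  assumes [measurable]: "f \<in> borel_measurable \<gamma>" "g \<in> borel_measurable \<gamma>"
    and "integrable \<gamma> (\<lambda>y. (f y)\<^sup>2)" "integrable \<gamma> (\<lambda>y. (g y)\<^sup>2)"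
  shows "integrable \<gamma> (\<lambda>y. f y * g y)"
proof (rule Bochner_Integration.integrable_bound[of _ "\<lambda>y. (f y)\<^sup>2 + (g y)\<^sup>2"])
  show "integrable \<gamma> (\<lambda>y. (f y)\<^sup>2 + (g y)\<^sup>2)" using assms(3,4) by simp
  show "(\<lambda>y. f y * g y) \<in> borel_measurable \<gamma>" by measurable
  show "AE x in \<gamma>. norm (f x * g x) \<le> norm ((f x)\<^sup>2 + (g x)\<^sup>2)"
  proof (rule AE_I2)
    fix x
    have "0 \<le> (\<bar>f x\<bar> - \<bar>g x\<bar>)\<^sup>2" by simp
    then have "2 * (\<bar>f x\<bar> * \<bar>g x\<bar>) \<le> (f x)\<^sup>2 + (g x)\<^sup>2"
      by (simp add: power2_diff)
    moreover have "0 \<le> \<bar>f x\<bar> * \<bar>g x\<bar>" by simp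
    ultimately have "\<bar>f x\<bar> * \<bar>g x\<bar> \<le> (f x)\<^sup>2 + (g x)\<^sup>2" by linarith
    then show "norm (f x * g x) \<le> norm ((f x)\<^sup>2 + (g x)\<^sup>2)"
      by (simp add: abs_mult)
  qed
qed

lemma sq_diff_int:
  fixes f g :: "(real^'n) \<times> (real^'n) \<Rightarrow> real"
  assumes [measurable]: "f \<in> borel_measurable \<gamma>" "g \<in> borel_measurable \<gamma>"
    and "integrable \<gamma> (\<lambda>y. (f y)\<^sup>2)" "integrable \<gamma> (\<lambda>y. (g y)\<^sup>2)"
  shows "integrable \<gamma> (\<lambda>y. (f y - g y)\<^sup>2)"
proof -
  have e: "(\<lambda>y. (f y - g y)\<^sup>2) = (\<lambda>y. (f y)\<^sup>2 + (g y)\<^sup>2 - 2 * (f y * g y))"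
    by (rule ext) (simp add: power2_diff)
  show ?thesis unfolding e using prod_int[OF assms] assms(3,4) by simp
qed

lemma Ui_meas[measurable]: "(\<lambda>\<omega>. Udisp \<omega> $ i) \<in> borel_measurable \<gamma>" by measurable

lemma Ui_int: "integrable \<gamma> (\<lambda>\<omega>. Udisp \<omega> $ i)"
  by (rule sq_int_imp_int[OF Ui_meas Ui_sq])

lemma c_F[measurable]: "c i \<in> borel_measurable (sigZ \<gamma> t)"
  unfolding c_def by (rule borel_measurable_cond_exp)

lemma c_meas[measurable]: "c i \<in> borel_measurable \<gamma>"
  unfolding c_def by (rule borel_measurable_cond_exp2)

lemma c_int: "integrable \<gamma> (c i)"
  unfolding c_def by (rule sigma_finite_subalgebra.real_cond_exp_int(1)[OF sfs Ui_int])

lemma c_sq: "integrable \<gamma> (\<lambda>\<omega>. (c i \<omega>)\<^sup>2)"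
  unfolding c_def
proof (rule sigma_finite_subalgebra.integrable_convex_cond_exp[OF sfs Ui_int, where I=UNIV and q="\<lambda>x. x\<^sup>2"])
  show "integrable \<gamma> (\<lambda>x. (Udisp x $ i)\<^sup>2)" by (rule Ui_sq)
  show "convex_on UNIV (\<lambda>x::real. x\<^sup>2)" using convex_power2 by simp
qed auto

lemma meas_F_to_g:
  "h \<in> borel_measurable (sigZ \<gamma> t) \<Longrightarrow> h \<in> borel_measurable \<gamma>"
  by (rule measurable_from_subalg[OF subalg])

lemma orth:
  assumes hF: "h \<in> borel_measurable (sigZ \<gamma> t)" and hsq: "integrable \<gamma> (\<lambda>\<omega>. (h \<omega>)\<^sup>2)"
  shows "integrable \<gamma> (\<lambda>\<omega>. h \<omega> * c i \<omega>)" "integrable \<gamma> (\<lambda>\<omega>. h \<omega> * (Udisp \<omega> $ i))"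
    "(\<integral>\<omega>. h \<omega> * c i \<omega> \<partial>\<gamma>) = (\<integral>\<omega>. h \<omega> * (Udisp \<omega> $ i) \<partial>\<gamma>)"
proof -
  have hg[measurable]: "h \<in> borel_measurable \<gamma>" by (rule meas_F_to_g[OF hF])
  show hU: "integrable \<gamma> (\<lambda>\<omega>. h \<omega> * (Udisp \<omega> $ i))"
    by (rule prod_int[OF hg Ui_meas hsq Ui_sq])
  show "integrable \<gamma> (\<lambda>\<omega>. h \<omega> * c i \<omega>)"
    unfolding c_def by (rule sigma_finite_subalgebra.real_cond_exp_intg(1)[OF sfs hU hF Ui_meas])
  show "(\<integral>\<omega>. h \<omega> * c i \<omega> \<partial>\<gamma>) = (\<integral>\<omega>. h \<omega> * (Udisp \<omega> $ i) \<partial>\<gamma>)"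
    unfolding c_def by (rule sigma_finite_subalgebra.real_cond_exp_intg(2)[OF sfs hU hF Ui_meas])
qed

lemma cvec_eq: "cond_exp_vec \<gamma> (sigZ \<gamma> t) Udisp \<omega> = (\<chi> i. c i \<omega>)"
  unfolding cond_exp_vec_def c_def by simp

lemma vstar_Z: "AE \<omega> in \<gamma>. vstar (Zt t \<omega>) = (\<chi> i. c i \<omega>)"
  using bayes unfolding bayes_regressor_def cvec_eq by simp

definition EV :: real where "EV = (\<Sum>i\<in>UNIV. \<integral>\<omega>. (Udisp \<omega> $ i - c i \<omega>)\<^sup>2 \<partial>\<gamma>)"

lemma pyth_comp:
  assumes vm[measurable]: "v \<in> borel_measurable borel"
    and vsq: "integrable \<gamma> (\<lambda>\<omega>. (v (Zt t \<omega>) $ i)\<^sup>2)"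
  shows "integrable \<gamma> (\<lambda>\<omega>. (v (Zt t \<omega>) $ i - Udisp \<omega> $ i)\<^sup>2)"
    "(\<integral>\<omega>. (v (Zt t \<omega>) $ i - Udisp \<omega> $ i)\<^sup>2 \<partial>\<gamma>) =
      (\<integral>\<omega>. (v (Zt t \<omega>) $ i - c i \<omega>)\<^sup>2 \<partial>\<gamma>) + (\<integral>\<omega>. (Udisp \<omega> $ i - c i \<omega>)\<^sup>2 \<partial>\<gamma>)"
proof -
  define a where "a \<omega> = v (Zt t \<omega>) $ i" for \<omega>
  define h where "h \<omega> = a \<omega> - c i \<omega>" for \<omega>
  have am[measurable]: "a \<in> borel_measurable \<gamma>" unfolding a_def by measurable
  have aF: "a \<in> borel_measurable (sigZ \<gamma> t)"
    unfolding a_def by (rule comp_F[of "\<lambda>z. v z $ i"]) measurable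
  have hF: "h \<in> borel_measurable (sigZ \<gamma> t)"
    unfolding h_def using aF c_F by (rule borel_measurable_diff)
  have hm[measurable]: "h \<in> borel_measurable \<gamma>" unfolding h_def by measurable
  have asq: "integrable \<gamma> (\<lambda>\<omega>. (a \<omega>)\<^sup>2)" unfolding a_def by (rule vsq)
  have hsq: "integrable \<gamma> (\<lambda>\<omega>. (h \<omega>)\<^sup>2)" unfolding h_def by (rule sq_diff_int[OF am c_meas asq c_sq])
  have Ucsq: "integrable \<gamma> (\<lambda>\<omega>. (Udisp \<omega> $ i - c i \<omega>)\<^sup>2)" by (rule sq_diff_int[OF Ui_meas c_meas Ui_sq c_sq])
  note o = orth[OF hF hsq, of i]
  have e: "(\<lambda>\<omega>. (a \<omega> - Udisp \<omega> $ i)\<^sup>2) = (\<lambda>\<omega>. (h \<omega>)\<^sup>2 + (Udisp \<omega> $ i - c i \<omega>)\<^sup>2 - 2 * (h \<omega> * (Udisp \<omega> $ i) - h \<omega> * c i \<omega>))"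
    by (rule ext) (simp add: h_def power2_eq_square algebra_simps)
  have ii: "integrable \<gamma> (\<lambda>\<omega>. (h \<omega>)\<^sup>2 + (Udisp \<omega> $ i - c i \<omega>)\<^sup>2 - 2 * (h \<omega> * (Udisp \<omega> $ i) - h \<omega> * c i \<omega>))"
    using hsq Ucsq o(1,2) by simp
  show "integrable \<gamma> (\<lambda>\<omega>. (v (Zt t \<omega>) $ i - Udisp \<omega> $ i)\<^sup>2)"
    using ii unfolding e[symmetric] a_def .
  have "(\<integral>\<omega>. (a \<omega> - Udisp \<omega> $ i)\<^sup>2 \<partial>\<gamma>) = (\<integral>\<omega>. (h \<omega>)\<^sup>2 \<partial>\<gamma>) + (\<integral>\<omega>. (Udisp \<omega> $ i - c i \<omega>)\<^sup>2 \<partial>\<gamma>)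
       - 2 * ((\<integral>\<omega>. h \<omega> * (Udisp \<omega> $ i) \<partial>\<gamma>) - (\<integral>\<omega>. h \<omega> * c i \<omega> \<partial>\<gamma>))"
    unfolding e using hsq Ucsq o(1,2) by simp
  also have "\<dots> = (\<integral>\<omega>. (h \<omega>)\<^sup>2 \<partial>\<gamma>) + (\<integral>\<omega>. (Udisp \<omega> $ i - c i \<omega>)\<^sup>2 \<partial>\<gamma>)"
    using o(3) by simp
  finally show "(\<integral>\<omega>. (v (Zt t \<omega>) $ i - Udisp \<omega> $ i)\<^sup>2 \<partial>\<gamma>) =
      (\<integral>\<omega>. (v (Zt t \<omega>) $ i - c i \<omega>)\<^sup>2 \<partial>\<gamma>) + (\<integral>\<omega>. (Udisp \<omega> $ i - c i \<omega>)\<^sup>2 \<partial>\<gamma>)"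
    unfolding h_def a_def .
qed

lemma pyth:
  assumes vm[measurable]: "v \<in> borel_measurable borel"
    and vsq: "\<And>i. integrable \<gamma> (\<lambda>\<omega>. (v (Zt t \<omega>) $ i)\<^sup>2)"
  shows "loss \<gamma> t v = ennreal ((\<Sum>i\<in>UNIV. \<integral>\<omega>. (v (Zt t \<omega>) $ i - c i \<omega>)\<^sup>2 \<partial>\<gamma>) + EV)"
proof -
  have nq: "(norm (v (Zt t \<omega>) - Udisp \<omega>))\<^sup>2 = (\<Sum>i\<in>UNIV. (v (Zt t \<omega>) $ i - Udisp \<omega> $ i)\<^sup>2)" for \<omega>
    by (simp add: norm_sq_vec)
  have ints: "integrable \<gamma> (\<lambda>\<omega>. (\<Sum>i\<in>UNIV. (v (Zt t \<omega>) $ i - Udisp \<omega> $ i)\<^sup>2))"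
    using pyth_comp(1)[OF vm vsq] by (intro Bochner_Integration.integrable_sum) auto
  have "loss \<gamma> t v = (\<integral>\<^sup>+ \<omega>. ennreal (\<Sum>i\<in>UNIV. (v (Zt t \<omega>) $ i - Udisp \<omega> $ i)\<^sup>2) \<partial>\<gamma>)"
    unfolding loss_def nq ..
  also have "\<dots> = ennreal (\<integral>\<omega>. (\<Sum>i\<in>UNIV. (v (Zt t \<omega>) $ i - Udisp \<omega> $ i)\<^sup>2) \<partial>\<gamma>)"
    by (rule nn_integral_eq_integral[OF ints]) (simp add: sum_nonneg)
  also have "(\<integral>\<omega>. (\<Sum>i\<in>UNIV. (v (Zt t \<omega>) $ i - Udisp \<omega> $ i)\<^sup>2) \<partial>\<gamma>)
      = (\<Sum>i\<in>UNIV. \<integral>\<omega>. (v (Zt t \<omega>) $ i - Udisp \<omega> $ i)\<^sup>2 \<partial>\<gamma>)"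
    using pyth_comp(1)[OF vm vsq] by (intro Bochner_Integration.integral_sum) auto
  also have "\<dots> = (\<Sum>i\<in>UNIV. (\<integral>\<omega>. (v (Zt t \<omega>) $ i - c i \<omega>)\<^sup>2 \<partial>\<gamma>) + (\<integral>\<omega>. (Udisp \<omega> $ i - c i \<omega>)\<^sup>2 \<partial>\<gamma>))"
    using pyth_comp(2)[OF vm vsq] by simp
  also have "\<dots> = (\<Sum>i\<in>UNIV. \<integral>\<omega>. (v (Zt t \<omega>) $ i - c i \<omega>)\<^sup>2 \<partial>\<gamma>) + EV"
    unfolding EV_def by (rule sum.distrib)
  finally show ?thesis .
qed

lemma EV_nonneg: "0 \<le> EV"
  unfolding EV_def by (intro sum_nonneg integral_nonneg_AE) auto

lemma loss_lower:
  assumes vm[measurable]: "v \<in> borel_measurable borel"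
  shows "ennreal EV \<le> loss \<gamma> t v"
proof (cases "loss \<gamma> t v = \<infinity>")
  case True then show ?thesis by simp
next
  case False
  have nint: "integrable \<gamma> (\<lambda>\<omega>. (norm (v (Zt t \<omega>) - Udisp \<omega>))\<^sup>2)"
  proof (rule integrableI_nonneg)
    show "(\<lambda>\<omega>. (norm (v (Zt t \<omega>) - Udisp \<omega>))\<^sup>2) \<in> borel_measurable \<gamma>" by measurable
    show "AE \<omega> in \<gamma>. 0 \<le> (norm (v (Zt t \<omega>) - Udisp \<omega>))\<^sup>2" by simp
    show "(\<integral>\<^sup>+ \<omega>. ennreal ((norm (v (Zt t \<omega>) - Udisp \<omega>))\<^sup>2) \<partial>\<gamma>) < \<infinity>"
      using False unfolding loss_def by (simp add: less_top)
  qed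
  have vsq: "integrable \<gamma> (\<lambda>\<omega>. (v (Zt t \<omega>) $ i)\<^sup>2)" for i
  proof (rule Bochner_Integration.integrable_bound[of _ "\<lambda>\<omega>. 2 * (norm (v (Zt t \<omega>) - Udisp \<omega>))\<^sup>2 + 2 * (Udisp \<omega> $ i)\<^sup>2"])
    show "integrable \<gamma> (\<lambda>\<omega>. 2 * (norm (v (Zt t \<omega>) - Udisp \<omega>))\<^sup>2 + 2 * (Udisp \<omega> $ i)\<^sup>2)"
      using nint Ui_sq[of i] by simp
    show "(\<lambda>\<omega>. (v (Zt t \<omega>) $ i)\<^sup>2) \<in> borel_measurable \<gamma>" by measurable
    show "AE \<omega> in \<gamma>. norm ((v (Zt t \<omega>) $ i)\<^sup>2) \<le> norm (2 * (norm (v (Zt t \<omega>) - Udisp \<omega>))\<^sup>2 + 2 * (Udisp \<omega> $ i)\<^sup>2)"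
    proof (rule AE_I2)
      fix \<omega>
      define a where "a = v (Zt t \<omega>) $ i"
      define u where "u = Udisp \<omega> $ i"
      have c1: "\<bar>a - u\<bar> \<le> norm (v (Zt t \<omega>) - Udisp \<omega>)"
        unfolding a_def u_def using component_le_norm_cart[of "v (Zt t \<omega>) - Udisp \<omega>" i] by simp
      have c2: "(a - u)\<^sup>2 \<le> (norm (v (Zt t \<omega>) - Udisp \<omega>))\<^sup>2"
        using power_mono[OF c1, of 2] by simp
      have c3: "a\<^sup>2 \<le> 2 * (a - u)\<^sup>2 + 2 * u\<^sup>2"
        using sum_squares_ge_zero[of "a - 2*u" 0] by (simp add: power2_eq_square algebra_simps)
      show "norm ((v (Zt t \<omega>) $ i)\<^sup>2) \<le> norm (2 * (norm (v (Zt t \<omega>) - Udisp \<omega>))\<^sup>2 + 2 * (Udisp \<omega> $ i)\<^sup>2)"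
        using c2 c3 unfolding a_def[symmetric] u_def[symmetric] by simp
    qed
  qed
  have "0 \<le> (\<Sum>i\<in>UNIV. \<integral>\<omega>. (v (Zt t \<omega>) $ i - c i \<omega>)\<^sup>2 \<partial>\<gamma>)"
    by (intro sum_nonneg integral_nonneg_AE) auto
  then show ?thesis unfolding pyth[OF vm vsq] by (simp add: EV_nonneg ennreal_leI)
qed

lemma loss_vstar: "loss \<gamma> t vstar = ennreal EV"
proof -
  have ae: "AE \<omega> in \<gamma>. vstar (Zt t \<omega>) $ i = c i \<omega>" for i
    using vstar_Z by eventually_elim simp
  have vsq: "integrable \<gamma> (\<lambda>\<omega>. (vstar (Zt t \<omega>) $ i)\<^sup>2)" for i
  proof (subst integrable_cong_AE)
    show "(\<lambda>\<omega>. (vstar (Zt t \<omega>) $ i)\<^sup>2) \<in> borel_measurable \<gamma>" by measurable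
    show "(\<lambda>\<omega>. (c i \<omega>)\<^sup>2) \<in> borel_measurable \<gamma>" by measurable
    show "AE \<omega> in \<gamma>. (vstar (Zt t \<omega>) $ i)\<^sup>2 = (c i \<omega>)\<^sup>2" using ae[of i] by eventually_elim simp
    show "integrable \<gamma> (\<lambda>\<omega>. (c i \<omega>)\<^sup>2)" by (rule c_sq)
  qed
  have z: "(\<integral>\<omega>. (vstar (Zt t \<omega>) $ i - c i \<omega>)\<^sup>2 \<partial>\<gamma>) = 0" for i
  proof -
    have ae0: "AE \<omega> in \<gamma>. (vstar (Zt t \<omega>) $ i - c i \<omega>)\<^sup>2 = 0" using ae[of i] by eventually_elim simp
    have m: "(\<lambda>\<omega>. (vstar (Zt t \<omega>) $ i - c i \<omega>)\<^sup>2) \<in> borel_measurable \<gamma>" by measurable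
    have "(\<integral>\<omega>. (vstar (Zt t \<omega>) $ i - c i \<omega>)\<^sup>2 \<partial>\<gamma>) = (\<integral>\<omega>. 0 \<partial>\<gamma>)"
      by (rule integral_cong_AE[OF m borel_measurable_const ae0])
    then show ?thesis by simp
  qed
  show ?thesis unfolding pyth[OF vstar_meas vsq] z by simp
qed

lemma EV_condvar: "(\<integral>\<omega>. cond_var \<gamma> t \<omega> \<partial>\<gamma>) = EV"
proof -
  have e: "(\<lambda>\<omega>. (norm (Udisp \<omega> - cond_exp_vec \<gamma> (sigZ \<gamma> t) Udisp \<omega>))\<^sup>2)
      = (\<lambda>\<omega>. \<Sum>i\<in>UNIV. (Udisp \<omega> $ i - c i \<omega>)\<^sup>2)"
    by (rule ext) (simp add: cvec_eq norm_sq_vec)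
  have ii: "integrable \<gamma> (\<lambda>\<omega>. (Udisp \<omega> $ i - c i \<omega>)\<^sup>2)" for i
    by (rule sq_diff_int[OF Ui_meas c_meas Ui_sq c_sq])
  have int: "integrable \<gamma> (\<lambda>\<omega>. \<Sum>i\<in>UNIV. (Udisp \<omega> $ i - c i \<omega>)\<^sup>2)"
    using ii by (intro Bochner_Integration.integrable_sum) auto
  have "(\<integral>\<omega>. cond_var \<gamma> t \<omega> \<partial>\<gamma>) = (\<integral>\<omega>. (\<Sum>i\<in>UNIV. (Udisp \<omega> $ i - c i \<omega>)\<^sup>2) \<partial>\<gamma>)"
    unfolding cond_var_def e by (rule sigma_finite_subalgebra.real_cond_exp_int(2)[OF sfs int])
  also have "\<dots> = EV" unfolding EV_def using ii by (intro Bochner_Integration.integral_sum) auto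
  finally show ?thesis .
qed

lemma part3: "(INF v \<in> borel_measurable borel. loss \<gamma> t v) = ennreal (\<integral>\<omega>. cond_var \<gamma> t \<omega> \<partial>\<gamma>)"
  unfolding EV_condvar
proof (rule antisym)
  show "(INF v \<in> borel_measurable borel. loss \<gamma> t v) \<le> ennreal EV"
    using loss_vstar vstar_meas by (metis INF_lower)
  show "ennreal EV \<le> (INF v \<in> borel_measurable borel. loss \<gamma> t v)"
    by (rule INF_greatest) (rule loss_lower)
qed

definition T :: "real^'n^'n \<Rightarrow> (real^'n) \<times> (real^'n) \<Rightarrow> (real^'n) \<times> (real^'n)" where
  "T g = (\<lambda>(x, y). (g *v x, g *v y))"

lemma G_orth: "g \<in> G \<Longrightarrow> orthogonal_matrix g"
  using G unfolding compact_orth_group_def by blast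

lemma G_transp: "g \<in> G \<Longrightarrow> transpose g \<in> G"
  using G unfolding compact_orth_group_def by blast

lemma G_inv1: "g \<in> G \<Longrightarrow> g *v (transpose g *v x) = x"
proof -
  assume "g \<in> G"
  then have m: "g ** transpose g = mat 1" using G_orth[of g] unfolding orthogonal_matrix_def by simp
  have "g *v (transpose g *v x) = (g ** transpose g) *v x" by (rule matrix_vector_mul_assoc)
  then show ?thesis unfolding m matrix_vector_mul_lid .
qed

lemma G_inv2: "g \<in> G \<Longrightarrow> transpose g *v (g *v x) = x"
proof -
  assume "g \<in> G"
  then have m: "transpose g ** g = mat 1" using G_orth[of g] unfolding orthogonal_matrix_def by simp
  have "transpose g *v (g *v x) = (transpose g ** g) *v x" by (rule matrix_vector_mul_assoc)
  then show ?thesis unfolding m matrix_vector_mul_lid .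
qed

lemma G_norm: "g \<in> G \<Longrightarrow> norm (g *v x) = norm x"
proof -
  assume g: "g \<in> G"
  have "orthogonal_transformation ((*v) g)"
    unfolding orthogonal_transformation_matrix using G_orth[OF g] by (simp add: matrix_vector_mul_linear)
  then show ?thesis unfolding orthogonal_transformation by blast
qed

lemma G_dist: "g \<in> G \<Longrightarrow> dist (g *v x) (g *v y) = dist x y"
  by (simp add: dist_norm G_norm matrix_vector_mult_diff_distrib[symmetric])

lemma T_cont: "continuous_on UNIV (T g)"
proof -
  have "T g = (\<lambda>p. (g *v fst p, g *v snd p))" by (rule ext) (simp add: T_def case_prod_beta)
  moreover have "continuous_on UNIV (\<lambda>p::(real^'n)\<times>(real^'n). (g *v fst p, g *v snd p))"
  proof (intro continuous_on_Pair)
    show "continuous_on UNIV (\<lambda>p::(real^'n)\<times>(real^'n). g *v fst p)"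
      by (rule linear_continuous_on[OF bounded_linear_compose[OF matrix_vector_mul_bounded_linear bounded_linear_fst]])
    show "continuous_on UNIV (\<lambda>p::(real^'n)\<times>(real^'n). g *v snd p)"
      by (rule linear_continuous_on[OF bounded_linear_compose[OF matrix_vector_mul_bounded_linear bounded_linear_snd]])
  qed
  ultimately show ?thesis by (simp only:)
qed

lemma T_borel[measurable]: "T g \<in> borel \<rightarrow>\<^sub>M borel"
  by (rule borel_measurable_continuous_onI[OF T_cont])

lemma T_meas[measurable]: "T g \<in> \<gamma> \<rightarrow>\<^sub>M borel"
  by (subst measurable_cong_sets[OF S refl]) simp

lemma Z_T: "Zt t (T g \<omega>) = g *v Zt t \<omega>"
  by (cases \<omega>) (simp add: Zt_def T_def matrix_vector_right_distrib matrix_vector_mult_scaleR)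

lemma U_T: "Udisp (T g \<omega>) = g *v Udisp \<omega>"
  by (cases \<omega>) (simp add: Udisp_def T_def matrix_vector_mult_diff_distrib)

lemma distr_T: "g \<in> G \<Longrightarrow> distr \<gamma> borel (T g) = \<gamma>"
  using inv unfolding T_def by blast

lemma cov:
  fixes f :: "(real^'n) \<times> (real^'n) \<Rightarrow> 'b::{banach, second_countable_topology}"
  assumes g: "g \<in> G" and f[measurable]: "f \<in> borel_measurable borel"
  shows "(\<integral>\<omega>. f \<omega> \<partial>\<gamma>) = (\<integral>\<omega>. f (T g \<omega>) \<partial>\<gamma>)"
    and "integrable \<gamma> f \<longleftrightarrow> integrable \<gamma> (\<lambda>\<omega>. f (T g \<omega>))"
proof -
  have "(\<integral>\<omega>. f \<omega> \<partial>\<gamma>) = (\<integral>\<omega>. f \<omega> \<partial>(distr \<gamma> borel (T g)))" using distr_T[OF g] by simp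
  also have "\<dots> = (\<integral>\<omega>. f (T g \<omega>) \<partial>\<gamma>)" by (rule integral_distr[OF T_meas f])
  finally show "(\<integral>\<omega>. f \<omega> \<partial>\<gamma>) = (\<integral>\<omega>. f (T g \<omega>) \<partial>\<gamma>)" .
  have "integrable \<gamma> f \<longleftrightarrow> integrable (distr \<gamma> borel (T g)) f" using distr_T[OF g] by simp
  also have "\<dots> \<longleftrightarrow> integrable \<gamma> (\<lambda>\<omega>. f (T g \<omega>))" by (rule integrable_distr_eq[OF T_meas f])
  finally show "integrable \<gamma> f \<longleftrightarrow> integrable \<gamma> (\<lambda>\<omega>. f (T g \<omega>))" .
qed

lemma U_int: "integrable \<gamma> Udisp"
proof -
  have "integrable \<gamma> (\<lambda>\<omega>. norm (Udisp \<omega>))"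
    by (rule sq_int_imp_int) (use U_sq in auto)
  then show ?thesis by (subst integrable_norm_iff[symmetric]) auto
qed

lemma vZ_int: "integrable \<gamma> (\<lambda>\<omega>. vstar (Zt t \<omega>))"
proof (rule Bochner_Integration.integrable_bound[of _ "\<lambda>\<omega>. \<Sum>i\<in>UNIV. \<bar>c i \<omega>\<bar>"])
  show "integrable \<gamma> (\<lambda>\<omega>. \<Sum>i\<in>UNIV. \<bar>c i \<omega>\<bar>)"
    using c_int by (intro Bochner_Integration.integrable_sum integrable_abs) auto
  show "(\<lambda>\<omega>. vstar (Zt t \<omega>)) \<in> borel_measurable \<gamma>" by measurable
  show "AE \<omega> in \<gamma>. norm (vstar (Zt t \<omega>)) \<le> norm (\<Sum>i\<in>UNIV. \<bar>c i \<omega>\<bar>)"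
    using vstar_Z
  proof eventually_elim
    case (elim \<omega>)
    have "norm (vstar (Zt t \<omega>)) \<le> (\<Sum>i\<in>UNIV. \<bar>vstar (Zt t \<omega>) $ i\<bar>)" by (rule norm_le_l1_cart)
    also have "\<dots> = (\<Sum>i\<in>UNIV. \<bar>c i \<omega>\<bar>)" using elim by simp
    also have "\<dots> \<le> norm (\<Sum>i\<in>UNIV. \<bar>c i \<omega>\<bar>)" by simp
    finally show ?case .
  qed
qed

lemma vorth:
  fixes \<phi> :: "(real^'n) \<times> (real^'n) \<Rightarrow> real"
  assumes \<phi>F: "\<phi> \<in> borel_measurable (sigZ \<gamma> t)" and b: "\<And>\<omega>. \<bar>\<phi> \<omega>\<bar> \<le> 1"
  shows "integrable \<gamma> (\<lambda>\<omega>. \<phi> \<omega> *\<^sub>R vstar (Zt t \<omega>))" "integrable \<gamma> (\<lambda>\<omega>. \<phi> \<omega> *\<^sub>R Udisp \<omega>)"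
    "(\<integral>\<omega>. \<phi> \<omega> *\<^sub>R vstar (Zt t \<omega>) \<partial>\<gamma>) = (\<integral>\<omega>. \<phi> \<omega> *\<^sub>R Udisp \<omega> \<partial>\<gamma>)"
proof -
  have \<phi>m[measurable]: "\<phi> \<in> borel_measurable \<gamma>" by (rule meas_F_to_g[OF \<phi>F])
  show i1: "integrable \<gamma> (\<lambda>\<omega>. \<phi> \<omega> *\<^sub>R vstar (Zt t \<omega>))"
  proof (rule Bochner_Integration.integrable_bound[OF vZ_int])
    show "(\<lambda>\<omega>. \<phi> \<omega> *\<^sub>R vstar (Zt t \<omega>)) \<in> borel_measurable \<gamma>" by measurable
    show "AE \<omega> in \<gamma>. norm (\<phi> \<omega> *\<^sub>R vstar (Zt t \<omega>)) \<le> norm (vstar (Zt t \<omega>))"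
      using b by (intro AE_I2) (simp add: mult_left_le_one_le)
  qed
  show i2: "integrable \<gamma> (\<lambda>\<omega>. \<phi> \<omega> *\<^sub>R Udisp \<omega>)"
  proof (rule Bochner_Integration.integrable_bound[OF U_int])
    show "(\<lambda>\<omega>. \<phi> \<omega> *\<^sub>R Udisp \<omega>) \<in> borel_measurable \<gamma>" by measurable
    show "AE \<omega> in \<gamma>. norm (\<phi> \<omega> *\<^sub>R Udisp \<omega>) \<le> norm (Udisp \<omega>)"
      using b by (intro AE_I2) (simp add: mult_left_le_one_le)
  qed
  have \<phi>sq: "integrable \<gamma> (\<lambda>\<omega>. (\<phi> \<omega>)\<^sup>2)"
  proof (rule finite_measure.integrable_const_bound[where B=1])
    show "finite_measure \<gamma>" by (rule finite_measure_axioms)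
    show "AE \<omega> in \<gamma>. norm ((\<phi> \<omega>)\<^sup>2) \<le> 1"
    proof (rule AE_I2)
      fix \<omega>
      have "\<bar>\<phi> \<omega>\<bar>\<^sup>2 \<le> 1\<^sup>2" by (rule power_mono[OF b]) simp
      then show "norm ((\<phi> \<omega>)\<^sup>2) \<le> 1" by simp
    qed
  qed measurable
  show "(\<integral>\<omega>. \<phi> \<omega> *\<^sub>R vstar (Zt t \<omega>) \<partial>\<gamma>) = (\<integral>\<omega>. \<phi> \<omega> *\<^sub>R Udisp \<omega> \<partial>\<gamma>)"
  proof (rule vec_eq_iff[THEN iffD2], intro allI)
    fix i
    have "(\<integral>\<omega>. \<phi> \<omega> *\<^sub>R vstar (Zt t \<omega>) \<partial>\<gamma>) $ i = (\<integral>\<omega>. (\<phi> \<omega> *\<^sub>R vstar (Zt t \<omega>)) $ i \<partial>\<gamma>)"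
      by (rule integral_bounded_linear[OF bounded_linear_vec_nth i1, symmetric])
    also have "\<dots> = (\<integral>\<omega>. \<phi> \<omega> * c i \<omega> \<partial>\<gamma>)"
    proof (rule integral_cong_AE)
      show "(\<lambda>\<omega>. (\<phi> \<omega> *\<^sub>R vstar (Zt t \<omega>)) $ i) \<in> borel_measurable \<gamma>" by measurable
      show "(\<lambda>\<omega>. \<phi> \<omega> * c i \<omega>) \<in> borel_measurable \<gamma>" by measurable
      show "AE \<omega> in \<gamma>. (\<phi> \<omega> *\<^sub>R vstar (Zt t \<omega>)) $ i = \<phi> \<omega> * c i \<omega>"
        using vstar_Z by eventually_elim simp
    qed
    also have "\<dots> = (\<integral>\<omega>. \<phi> \<omega> * (Udisp \<omega> $ i) \<partial>\<gamma>)" by (rule orth(3)[OF \<phi>F \<phi>sq])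
    also have "\<dots> = (\<integral>\<omega>. (\<phi> \<omega> *\<^sub>R Udisp \<omega>) $ i \<partial>\<gamma>)" by simp
    also have "\<dots> = (\<integral>\<omega>. \<phi> \<omega> *\<^sub>R Udisp \<omega> \<partial>\<gamma>) $ i"
      by (rule integral_bounded_linear[OF bounded_linear_vec_nth i2])
    finally show "(\<integral>\<omega>. \<phi> \<omega> *\<^sub>R vstar (Zt t \<omega>) \<partial>\<gamma>) $ i = (\<integral>\<omega>. \<phi> \<omega> *\<^sub>R Udisp \<omega> \<partial>\<gamma>) $ i" .
  qed
qed

lemma mv_meas[measurable]: "(\<lambda>z::real^'n. (h::real^'n^'n) *v z) \<in> borel_measurable borel"
  by (rule borel_measurable_continuous_onI[OF linear_continuous_on[OF matrix_vector_mul_bounded_linear]])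

lemma sets_F_cases:
  assumes "A \<in> sets (sigZ \<gamma> t)"
  obtains B where "B \<in> sets borel" "A = Zt t -` B"
proof -
  have "A \<in> {Zt t -` B \<inter> space \<gamma> |B. B \<in> sets borel}"
    using assms unfolding sigZ_def by (subst (asm) sets_vimage_algebra2) auto
  then show ?thesis using that by (auto simp: space_g)
qed

lemma key_identity:
  assumes g: "g \<in> G" and B: "B \<in> sets borel"
  shows "(\<integral>\<omega>. indicator B (Zt t \<omega>) *\<^sub>R (transpose g *v vstar (g *v Zt t \<omega>)) \<partial>\<gamma>)
       = (\<integral>\<omega>. indicator B (Zt t \<omega>) *\<^sub>R Udisp \<omega> \<partial>\<gamma>)"
proof -
  define h where "h = transpose g"
  have h: "h \<in> G" unfolding h_def by (rule G_transp[OF g])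
  have ghx: "g *v (h *v x) = x" for x unfolding h_def by (rule G_inv1[OF g])
  define \<phi> where "\<phi> \<omega> = (indicator B (h *v Zt t \<omega>) :: real)" for \<omega>
  have \<phi>F: "\<phi> \<in> borel_measurable (sigZ \<gamma> t)"
    unfolding \<phi>_def by (rule comp_F[of "\<lambda>z. indicator B (h *v z) :: real"]) (use B in measurable)
  have \<phi>b: "\<bar>\<phi> \<omega>\<bar> \<le> 1" for \<omega> unfolding \<phi>_def by (simp add: indicator_def)
  note vo = vorth[OF \<phi>F \<phi>b]
  have "(\<integral>\<omega>. indicator B (Zt t \<omega>) *\<^sub>R (h *v vstar (g *v Zt t \<omega>)) \<partial>\<gamma>)
      = (\<integral>\<omega>. indicator B (Zt t (T h \<omega>)) *\<^sub>R (h *v vstar (g *v Zt t (T h \<omega>))) \<partial>\<gamma>)"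
    by (rule cov(1)[OF h, of "\<lambda>\<omega>. indicator B (Zt t \<omega>) *\<^sub>R (h *v vstar (g *v Zt t \<omega>))"]) (use B in measurable)
  also have "\<dots> = (\<integral>\<omega>. h *v (\<phi> \<omega> *\<^sub>R vstar (Zt t \<omega>)) \<partial>\<gamma>)"
    unfolding Z_T ghx \<phi>_def by (simp add: matrix_vector_mult_scaleR)
  also have "\<dots> = h *v (\<integral>\<omega>. \<phi> \<omega> *\<^sub>R vstar (Zt t \<omega>) \<partial>\<gamma>)"
    by (rule integral_bounded_linear[OF matrix_vector_mul_bounded_linear vo(1)])
  also have "\<dots> = h *v (\<integral>\<omega>. \<phi> \<omega> *\<^sub>R Udisp \<omega> \<partial>\<gamma>)" unfolding vo(3) ..
  also have "\<dots> = (\<integral>\<omega>. h *v (\<phi> \<omega> *\<^sub>R Udisp \<omega>) \<partial>\<gamma>)"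
    by (rule integral_bounded_linear[OF matrix_vector_mul_bounded_linear vo(2), symmetric])
  also have "\<dots> = (\<integral>\<omega>. indicator B (Zt t (T h \<omega>)) *\<^sub>R Udisp (T h \<omega>) \<partial>\<gamma>)"
    unfolding Z_T U_T \<phi>_def by (simp add: matrix_vector_mult_scaleR)
  also have "\<dots> = (\<integral>\<omega>. indicator B (Zt t \<omega>) *\<^sub>R Udisp \<omega> \<partial>\<gamma>)"
    by (rule cov(1)[OF h, of "\<lambda>\<omega>. indicator B (Zt t \<omega>) *\<^sub>R Udisp \<omega>", symmetric]) (use B in measurable)
  finally show ?thesis unfolding h_def .
qed

lemma part1:
  assumes g: "g \<in> G"
  shows "AE z in distr \<gamma> borel (Zt t). vstar (g *v z) = g *v vstar z"
proof -
  define h where "h = transpose g"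
  have h: "h \<in> G" unfolding h_def by (rule G_transp[OF g])
  define w where "w z = h *v vstar (g *v z)" for z
  have wm[measurable]: "w \<in> borel_measurable borel" unfolding w_def by measurable
  have wint: "integrable \<gamma> (\<lambda>\<omega>. w (Zt t \<omega>))"
  proof -
    have "integrable \<gamma> (\<lambda>\<omega>. vstar (Zt t (T g \<omega>)))"
      using vZ_int cov(2)[OF g, of "\<lambda>\<omega>. vstar (Zt t \<omega>)"] by simp
    then have "integrable \<gamma> (\<lambda>\<omega>. h *v vstar (Zt t (T g \<omega>)))"
      by (rule integrable_bounded_linear[OF matrix_vector_mul_bounded_linear])
    then show ?thesis unfolding w_def Z_T .
  qed
  have A: "AE \<omega> in \<gamma>. c i \<omega> = w (Zt t \<omega>) $ i" for i
    unfolding c_def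
  proof (rule sigma_finite_subalgebra.real_cond_exp_charact[OF sfs])
    show "integrable \<gamma> (\<lambda>\<omega>. Udisp \<omega> $ i)" by (rule Ui_int)
    show "integrable \<gamma> (\<lambda>\<omega>. w (Zt t \<omega>) $ i)"
      by (rule integrable_bounded_linear[OF bounded_linear_vec_nth wint])
    show "(\<lambda>\<omega>. w (Zt t \<omega>) $ i) \<in> borel_measurable (sigZ \<gamma> t)"
      by (rule comp_F[of "\<lambda>z. w z $ i"]) measurable
    fix A assume "A \<in> sets (sigZ \<gamma> t)"
    then obtain B where B: "B \<in> sets borel" and AB: "A = Zt t -` B" by (rule sets_F_cases)
    have i1: "integrable \<gamma> (\<lambda>\<omega>. indicator B (Zt t \<omega>) *\<^sub>R Udisp \<omega>)"
    proof (rule Bochner_Integration.integrable_bound[OF U_int])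
      show "(\<lambda>\<omega>. indicator B (Zt t \<omega>) *\<^sub>R Udisp \<omega>) \<in> borel_measurable \<gamma>" using B by measurable
    qed (auto simp: indicator_def)
    have i2: "integrable \<gamma> (\<lambda>\<omega>. indicator B (Zt t \<omega>) *\<^sub>R w (Zt t \<omega>))"
    proof (rule Bochner_Integration.integrable_bound[OF wint])
      show "(\<lambda>\<omega>. indicator B (Zt t \<omega>) *\<^sub>R w (Zt t \<omega>)) \<in> borel_measurable \<gamma>" using B by measurable
    qed (auto simp: indicator_def)
    have "set_lebesgue_integral \<gamma> A (\<lambda>\<omega>. Udisp \<omega> $ i) = (\<integral>\<omega>. (indicator B (Zt t \<omega>) *\<^sub>R Udisp \<omega>) $ i \<partial>\<gamma>)"
      unfolding set_lebesgue_integral_def AB by (simp add: indicator_def)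
    also have "\<dots> = (\<integral>\<omega>. indicator B (Zt t \<omega>) *\<^sub>R Udisp \<omega> \<partial>\<gamma>) $ i"
      by (rule integral_bounded_linear[OF bounded_linear_vec_nth i1])
    also have "\<dots> = (\<integral>\<omega>. indicator B (Zt t \<omega>) *\<^sub>R w (Zt t \<omega>) \<partial>\<gamma>) $ i"
      unfolding w_def h_def key_identity[OF g B] ..
    also have "\<dots> = (\<integral>\<omega>. (indicator B (Zt t \<omega>) *\<^sub>R w (Zt t \<omega>)) $ i \<partial>\<gamma>)"
      by (rule integral_bounded_linear[OF bounded_linear_vec_nth i2, symmetric])
    also have "\<dots> = set_lebesgue_integral \<gamma> A (\<lambda>\<omega>. w (Zt t \<omega>) $ i)"
      unfolding set_lebesgue_integral_def AB by (simp add: indicator_def)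
    finally show "set_lebesgue_integral \<gamma> A (\<lambda>\<omega>. Udisp \<omega> $ i) = set_lebesgue_integral \<gamma> A (\<lambda>\<omega>. w (Zt t \<omega>) $ i)" .
  qed
  have Aall: "AE \<omega> in \<gamma>. \<forall>i. c i \<omega> = w (Zt t \<omega>) $ i"
    using A by (subst AE_all_countable) auto
  have C: "AE \<omega> in \<gamma>. vstar (g *v Zt t \<omega>) = g *v vstar (Zt t \<omega>)"
    using Aall vstar_Z
  proof eventually_elim
    case (elim \<omega>)
    then have "vstar (Zt t \<omega>) = w (Zt t \<omega>)" by (simp add: vec_eq_iff)
    then have "g *v vstar (Zt t \<omega>) = g *v (h *v vstar (g *v Zt t \<omega>))" by (simp add: w_def)
    also have "\<dots> = vstar (g *v Zt t \<omega>)" unfolding h_def by (rule G_inv1[OF g])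
    finally show ?case by simp
  qed
  have sets: "{z \<in> space borel. vstar (g *v z) = g *v vstar z} \<in> sets borel" by measurable
  show ?thesis by (subst AE_distr_iff[OF Z_meas sets]) (rule C)
qed

lemma ball_borel[measurable]: "ball (z::real^'n) r \<in> sets borel"
  by simp

definition mu :: "(real^'n) measure" where "mu = distr \<gamma> borel (Zt t)"

lemma bm: "bmeas mu"
proof (rule bmeas.intro)
  show "prob_space mu" unfolding mu_def by (rule prob_space_distr[OF Z_meas])
  show "bmeas_axioms mu" by (rule bmeas_axioms.intro) (simp add: mu_def)
qed

lemma int_mu: "f \<in> borel_measurable borel \<Longrightarrow> (\<integral>y. f y \<partial>mu) = (\<integral>\<omega>. f (Zt t \<omega>) \<partial>\<gamma>)"
  for f :: "real^'n \<Rightarrow> real"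
  unfolding mu_def by (rule integral_distr[OF Z_meas])

lemma intgr_mu: "f \<in> borel_measurable borel \<Longrightarrow> integrable mu f \<longleftrightarrow> integrable \<gamma> (\<lambda>\<omega>. f (Zt t \<omega>))"
  for f :: "real^'n \<Rightarrow> real"
  unfolding mu_def by (rule integrable_distr_eq[OF Z_meas])

lemma vstar_sq: "integrable \<gamma> (\<lambda>\<omega>. (vstar (Zt t \<omega>) $ i)\<^sup>2)"
proof (subst integrable_cong_AE)
  show "(\<lambda>\<omega>. (vstar (Zt t \<omega>) $ i)\<^sup>2) \<in> borel_measurable \<gamma>" by measurable
  show "(\<lambda>\<omega>. (c i \<omega>)\<^sup>2) \<in> borel_measurable \<gamma>" by measurable
  show "AE \<omega> in \<gamma>. (vstar (Zt t \<omega>) $ i)\<^sup>2 = (c i \<omega>)\<^sup>2" using vstar_Z by eventually_elim simp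
  show "integrable \<gamma> (\<lambda>\<omega>. (c i \<omega>)\<^sup>2)" by (rule c_sq)
qed

lemma vi_sq_mu: "integrable mu (\<lambda>y. (vstar y $ i)\<^sup>2)"
  by (subst intgr_mu) (simp_all add: vstar_sq)

definition N :: "real \<Rightarrow> real^'n \<Rightarrow> real^'n" where
  "N r z = (\<integral>\<omega>. indicator (ball z r) (Zt t \<omega>) *\<^sub>R Udisp \<omega> \<partial>\<gamma>)"

definition vr :: "real \<Rightarrow> real^'n \<Rightarrow> real^'n" where
  "vr r z = (\<chi> i. bmeas.avg mu r (\<lambda>y. vstar y $ i) z)"

lemma vr_meas[measurable]: "vr r \<in> borel_measurable borel"
  unfolding vr_def by (rule measurable_vec_lambda) (rule bmeas.avg_meas[OF bm], measurable)

lemma ballZ_F: "(\<lambda>\<omega>. indicator (ball z r) (Zt t \<omega>) :: real) \<in> borel_measurable (sigZ \<gamma> t)"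
  by (rule comp_F[of "indicator (ball z r)"]) simp

lemma ballZ_b: "\<bar>indicator (ball z r) (Zt t \<omega>) :: real\<bar> \<le> 1"
  by (simp add: indicator_def)

lemma vr_eq: "vr r z = inverse (measure mu (ball z r)) *\<^sub>R N r z"
proof (rule vec_eq_iff[THEN iffD2], intro allI)
  fix i
  note vo = vorth[OF ballZ_F ballZ_b, of z r]
  have "(\<integral>y. indicator (ball z r) y * (vstar y $ i) \<partial>mu) = (\<integral>\<omega>. indicator (ball z r) (Zt t \<omega>) * (vstar (Zt t \<omega>) $ i) \<partial>\<gamma>)"
    by (rule int_mu) measurable
  also have "\<dots> = (\<integral>\<omega>. (indicator (ball z r) (Zt t \<omega>) *\<^sub>R vstar (Zt t \<omega>)) $ i \<partial>\<gamma>)" by simp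
  also have "\<dots> = (\<integral>\<omega>. indicator (ball z r) (Zt t \<omega>) *\<^sub>R vstar (Zt t \<omega>) \<partial>\<gamma>) $ i"
    by (rule integral_bounded_linear[OF bounded_linear_vec_nth vo(1)])
  also have "\<dots> = N r z $ i" unfolding N_def vo(3) ..
  finally have e: "(\<integral>y. indicator (ball z r) y * (vstar y $ i) \<partial>mu) = N r z $ i" .
  have "vr r z $ i = (\<integral>y. indicator (ball z r) y * (vstar y $ i) \<partial>mu) / measure mu (ball z r)"
    by (simp add: vr_def bmeas.avg_def[OF bm])
  also have "\<dots> = N r z $ i / measure mu (ball z r)" unfolding e ..
  also have "\<dots> = (inverse (measure mu (ball z r)) *\<^sub>R N r z) $ i" by (simp add: divide_inverse mult.commute)
  finally show "vr r z $ i = (inverse (measure mu (ball z r)) *\<^sub>R N r z) $ i" .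
qed

lemma measure_mu_ball: "measure mu (ball z r) = (\<integral>\<omega>. indicator (ball z r) (Zt t \<omega>) \<partial>\<gamma>)"
proof -
  have "measure mu (ball z r) = (\<integral>y. indicator (ball z r) y \<partial>mu)"
    by (simp add: mu_def)
  also have "\<dots> = (\<integral>\<omega>. indicator (ball z r) (Zt t \<omega>) \<partial>\<gamma>)"
    by (rule int_mu) simp
  finally show ?thesis .
qed

lemma ind_ball_G: "g \<in> G \<Longrightarrow> indicator (ball (g *v z) r) (g *v y) = (indicator (ball z r) y :: real)"
  by (simp add: indicator_def G_dist)

lemma m_inv: "g \<in> G \<Longrightarrow> measure mu (ball (g *v z) r) = measure mu (ball z r)"
proof -
  assume g: "g \<in> G"
  have fm: "(\<lambda>\<omega>. indicator (ball (g *v z) r) (Zt t \<omega>) :: real) \<in> borel_measurable borel" by measurable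
  have "(\<integral>\<omega>. (indicator (ball (g *v z) r) (Zt t \<omega>) :: real) \<partial>\<gamma>) = (\<integral>\<omega>. (indicator (ball (g *v z) r) (Zt t (T g \<omega>)) :: real) \<partial>\<gamma>)"
    using cov(1)[OF g fm] by simp
  also have "\<dots> = (\<integral>\<omega>. (indicator (ball z r) (Zt t \<omega>) :: real) \<partial>\<gamma>)"
    unfolding Z_T ind_ball_G[OF g] ..
  finally show ?thesis unfolding measure_mu_ball .
qed

lemma N_inv: "g \<in> G \<Longrightarrow> N r (g *v z) = g *v N r z"
proof -
  assume g: "g \<in> G"
  have int: "integrable \<gamma> (\<lambda>\<omega>. indicator (ball z r) (Zt t \<omega>) *\<^sub>R Udisp \<omega>)"
    by (rule vorth(2)[OF ballZ_F ballZ_b])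
  have fm: "(\<lambda>\<omega>. indicator (ball (g *v z) r) (Zt t \<omega>) *\<^sub>R Udisp \<omega>) \<in> borel_measurable borel" by measurable
  have "N r (g *v z) = (\<integral>\<omega>. indicator (ball (g *v z) r) (Zt t (T g \<omega>)) *\<^sub>R Udisp (T g \<omega>) \<partial>\<gamma>)"
    unfolding N_def using cov(1)[OF g fm] by simp
  also have "\<dots> = (\<integral>\<omega>. g *v (indicator (ball z r) (Zt t \<omega>) *\<^sub>R Udisp \<omega>) \<partial>\<gamma>)"
    unfolding Z_T U_T ind_ball_G[OF g] by (simp add: matrix_vector_mult_scaleR)
  also have "\<dots> = g *v N r z"
    unfolding N_def by (rule integral_bounded_linear[OF matrix_vector_mul_bounded_linear int])
  finally show ?thesis .
qed

lemma vr_equiv: "equivariant G (vr r)"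
  unfolding equivariant_def
proof (intro ballI allI)
  fix g z assume g: "g \<in> G"
  show "vr r (g *v z) = g *v vr r z"
    unfolding vr_eq m_inv[OF g] N_inv[OF g] by (simp add: matrix_vector_mult_scaleR)
qed

lemma vr_loss:
  assumes r: "r > 0"
  shows "loss \<gamma> t (vr r) = ennreal ((\<Sum>i\<in>UNIV. \<integral>y. (bmeas.avg mu r (\<lambda>y. vstar y $ i) y - vstar y $ i)\<^sup>2 \<partial>mu) + EV)"
proof -
  have am[measurable]: "bmeas.avg mu r (\<lambda>y. vstar y $ i) \<in> borel_measurable borel" for i
    by (rule bmeas.avg_meas[OF bm]) measurable
  have vsq: "integrable \<gamma> (\<lambda>\<omega>. (vr r (Zt t \<omega>) $ i)\<^sup>2)" for i
  proof -
    have "integrable mu (\<lambda>y. (bmeas.avg mu r (\<lambda>y. vstar y $ i) y)\<^sup>2)"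
      by (rule bmeas.avg_L2(1)[OF bm _ vi_sq_mu r]) measurable
    then show ?thesis unfolding vr_def by (subst (asm) intgr_mu) simp_all
  qed
  have comp: "(\<integral>\<omega>. (vr r (Zt t \<omega>) $ i - c i \<omega>)\<^sup>2 \<partial>\<gamma>) = (\<integral>y. (bmeas.avg mu r (\<lambda>y. vstar y $ i) y - vstar y $ i)\<^sup>2 \<partial>mu)" for i
  proof -
    have "(\<integral>\<omega>. (vr r (Zt t \<omega>) $ i - c i \<omega>)\<^sup>2 \<partial>\<gamma>) = (\<integral>\<omega>. (bmeas.avg mu r (\<lambda>y. vstar y $ i) (Zt t \<omega>) - vstar (Zt t \<omega>) $ i)\<^sup>2 \<partial>\<gamma>)"
    proof (rule integral_cong_AE)
      show "(\<lambda>\<omega>. (vr r (Zt t \<omega>) $ i - c i \<omega>)\<^sup>2) \<in> borel_measurable \<gamma>" by measurable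
      show "(\<lambda>\<omega>. (bmeas.avg mu r (\<lambda>y. vstar y $ i) (Zt t \<omega>) - vstar (Zt t \<omega>) $ i)\<^sup>2) \<in> borel_measurable \<gamma>" by measurable
      show "AE \<omega> in \<gamma>. (vr r (Zt t \<omega>) $ i - c i \<omega>)\<^sup>2 = (bmeas.avg mu r (\<lambda>y. vstar y $ i) (Zt t \<omega>) - vstar (Zt t \<omega>) $ i)\<^sup>2"
        using vstar_Z by eventually_elim (simp add: vr_def)
    qed
    also have "\<dots> = (\<integral>y. (bmeas.avg mu r (\<lambda>y. vstar y $ i) y - vstar y $ i)\<^sup>2 \<partial>mu)"
      by (rule int_mu[symmetric]) measurable
    finally show ?thesis .
  qed
  show ?thesis unfolding pyth[OF vr_meas vsq] comp ..
qed

lemma part2_le: "(INF v \<in> {v \<in> borel_measurable borel. equivariant G v}. loss \<gamma> t v) \<le> ennreal EV"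
proof (rule ennreal_le_epsilon)
  fix e :: real assume e: "e > 0"
  define D where "D k = (\<Sum>i\<in>UNIV. \<integral>y. (bmeas.avg mu (bmeas.rk k) (\<lambda>y. vstar y $ i) y - vstar y $ i)\<^sup>2 \<partial>mu)" for k
  have "D \<longlonglongrightarrow> (\<Sum>i\<in>(UNIV::'n set). 0)"
    unfolding D_def
  proof (rule tendsto_sum)
    fix i :: 'n
    have "bmeas.conv mu (\<lambda>y. vstar y $ i)"
      by (rule bmeas.conv_all[OF bm _ vi_sq_mu]) measurable
    then show "(\<lambda>k. \<integral>y. (bmeas.avg mu (bmeas.rk k) (\<lambda>y. vstar y $ i) y - vstar y $ i)\<^sup>2 \<partial>mu) \<longlonglongrightarrow> 0"
      unfolding bmeas.conv_def[OF bm] .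
  qed
  then have "D \<longlonglongrightarrow> 0" by simp
  from LIMSEQ_D[OF this e] obtain k0 where k0: "\<And>k. k \<ge> k0 \<Longrightarrow> norm (D k - 0) < e" by blast
  have Dk: "D k0 < e" using k0[of k0] by simp
  have rpos: "bmeas.rk k0 > 0" by (rule bmeas.rk_pos[OF bm])
  have "(INF v \<in> {v \<in> borel_measurable borel. equivariant G v}. loss \<gamma> t v) \<le> loss \<gamma> t (vr (bmeas.rk k0))"
    by (rule INF_lower) (simp add: vr_equiv)
  also have "\<dots> = ennreal (D k0 + EV)" unfolding vr_loss[OF rpos] D_def ..
  also have "\<dots> \<le> ennreal (EV + e)" using Dk by (intro ennreal_leI) simp
  also have "\<dots> = ennreal EV + ennreal e" using EV_nonneg e by (simp add: ennreal_plus)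
  finally show "(INF v \<in> {v \<in> borel_measurable borel. equivariant G v}. loss \<gamma> t v) \<le> ennreal EV + ennreal e" .
qed

lemma part2: "(INF v \<in> {v \<in> borel_measurable borel. equivariant G v}. loss \<gamma> t v) = (INF v \<in> borel_measurable borel. loss \<gamma> t v)"
proof (rule antisym)
  show "(INF v \<in> {v \<in> borel_measurable borel. equivariant G v}. loss \<gamma> t v) \<le> (INF v \<in> borel_measurable borel. loss \<gamma> t v)"
    using part2_le part3 EV_condvar by simp
  show "(INF v \<in> borel_measurable borel. loss \<gamma> t v) \<le> (INF v \<in> {v \<in> borel_measurable borel. equivariant G v}. loss \<gamma> t v)"
    by (rule INF_superset_mono) auto
qed

end

theorem mainTheorem7:
  fixes G :: "(real^'n^'n) set"
    and \<gamma> :: "((real^'n) \<times> (real^'n)) measure"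
    and t :: real
    and vstar :: "real^'n \<Rightarrow> real^'n"
  assumes "compact_orth_group G"
    and "prob_space \<gamma>"
    and "sets \<gamma> = sets borel"
    and "integrable \<gamma> (\<lambda>(x, y). (norm x)\<^sup>2)"
    and "integrable \<gamma> (\<lambda>(x, y). (norm y)\<^sup>2)"
    and "\<forall>g\<in>G. distr \<gamma> borel (\<lambda>(x, y). (g *v x, g *v y)) = \<gamma>"
    and "t \<in> {0..1}"
    and "bayes_regressor \<gamma> t vstar"
  shows "(\<forall>g\<in>G. AE z in distr \<gamma> borel (Zt t). vstar (g *v z) = g *v vstar z)
    \<and> (INF v \<in> {v \<in> borel_measurable borel. equivariant G v}. loss \<gamma> t v)
        = (INF v \<in> borel_measurable borel. loss \<gamma> t v)
    \<and> (INF v \<in> borel_measurable borel. loss \<gamma> t v)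
        = ennreal (\<integral>\<omega>. cond_var \<gamma> t \<omega> \<partial>\<gamma>)"
proof -
  interpret setting G \<gamma> t vstar
    by (rule setting.intro) (use assms in auto)
  show ?thesis using part1 part2 part3 by blast
qed

end
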